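(* Let $A$ and $B$ be algebras such that the right $A$-module $A_A$ is idempotent and non-degenerate, let $s\colon B\to M(A)$ be a homomorphism and $t\colon B\to M(A)$ an anti-homomorphism with commuting images such that the $B$-modules ${}_BA$ and $A^B$ are faithful and idempotent. Assume moreover one of the following: (1) the right module $A_A$ has local units in $A$; (2) there exists a left separability multiplier $E\in M(B\otimes B^{\mathrm{op}})$; (3) the algebra $B$ is firm and the $B$-modules ${}_BA$ and $A^B$ are locally projective. Then ${}_BA\otimes A^B$ is non-degenerate as a right module over $A\otimes1$ and over $1\otimes A$.
   Context: All algebras are associative complex algebras, not necessarily unital. For an algebra $A$ with $A_A$ non-degenerate, $L(A)$ is the algebra of right $A$-module endomorphisms of $A$, containing $A$ via left multiplication, and $M(A)=\{T\in L(A): aT\in A\ \forall a\in A\}$. ${}_BA$ is $A$ as a left $B$-module via $x\cdot a=s(x)a$; $A^B$ is $A$ as a right $B$-module via $a\cdot x=t(x)a$; faithful and idempotent means $s$, $t$ injective and $s(B)A=A=t(B)A$. ${}_BA\otimes A^B$ is the quotient of $A\otimes A$ by the span of $s(x)a\otimes b-a\otimes t(x)b$; it is a right module over $A\otimes1$ and $1\otimes A$ by right multiplication in the respective factor; non-degenerate means: if $w(c\otimes1)=0$ for all $c\in A$ then $w=0$ (and likewise for $1\otimes c$). A module $M_D$ is non-degenerate if $mD=0$ implies $m=0$; $A_A$ has local units if for every finite $F\subseteq A$ there is $e\in A$ with $ae=a$ for all $a\in F$. Under the hypotheses $B$ is a non-degenerate algebra, so $M(B\otimes B^{\mathrm{op}})$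 makes sense. A left separability multiplier is $E\in M(B\otimes B^{\mathrm{op}})$ such that for all $x\in B$, $E(x\otimes1)=E(1\otimes x^{\mathrm{op}})\in B\otimes B^{\mathrm{op}}$ and the linear map $y\otimes z^{\mathrm{op}}\mapsto zy$ sends this element to $x$. An algebra $D$ is firm if multiplication $D\otimes_DD\to D$ is an isomorphism. A $D$-module $M$ is locally projective if for every finite $F\subseteq M$ there are finitely many module maps $\upsilon_i\colon M\to D$ and $m_i\colon D\to M$ with $\sum_im_i(\upsilon_i(m))=m$ for all $m\in F$. *)

theory Defs
  imports Complex_Main
begin

text \<open>Complex algebras (associative, not necessarily unital) are modelled as a type of
  class ring together with a scalar multiplication by complex numbers.\<close>

definition calg :: "(complex \<Rightarrow> 'a::ring \<Rightarrow> 'a) \<Rightarrow> bool" where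
  "calg sc \<longleftrightarrow>
     (\<forall>c x y. sc c (x + y) = sc c x + sc c y) \<and>
     (\<forall>c d x. sc (c + d) x = sc c x + sc d x) \<and>
     (\<forall>c d x. sc c (sc d x) = sc (c * d) x) \<and>
     (\<forall>x. sc 1 x = x) \<and>
     (\<forall>c x y. sc c (x * y) = sc c x * y \<and> sc c (x * y) = x * sc c y)"

definition clin :: "(complex \<Rightarrow> 'a::ab_group_add \<Rightarrow> 'a) \<Rightarrow> (complex \<Rightarrow> 'b::ab_group_add \<Rightarrow> 'b)
                    \<Rightarrow> ('a \<Rightarrow> 'b) \<Rightarrow> bool" where
  "clin sc1 sc2 f \<longleftrightarrow> (\<forall>u v. f (u + v) = f u + f v) \<and> (\<forall>c u. f (sc1 c u) = sc2 c (f u))"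

definition cspan :: "(complex \<Rightarrow> 'a::ab_group_add \<Rightarrow> 'a) \<Rightarrow> 'a set \<Rightarrow> 'a set" where
  "cspan sc S = {x. \<exists>(n::nat) c v. (\<forall>i<n. v i \<in> S) \<and> x = (\<Sum>i<n. sc (c i) (v i))}"

text \<open>The multiplier algebra M(A): right A-module endomorphisms T of A with aT in A.\<close>
definition in_MA :: "(complex \<Rightarrow> 'a::ring \<Rightarrow> 'a) \<Rightarrow> ('a \<Rightarrow> 'a) \<Rightarrow> bool" where
  "in_MA sc T \<longleftrightarrow> clin sc sc T \<and> (\<forall>a b. T (a * b) = T a * b) \<and>
     (\<forall>a. \<exists>c. \<forall>b. a * T b = c * b)"

text \<open>Free complex vector space on a set X: finitely supported functions X \<Rightarrow> complex.\<close>
definition fsupp :: "('x \<Rightarrow> complex) \<Rightarrow> bool" where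
  "fsupp f \<longleftrightarrow> finite {p. f p \<noteq> 0}"

definition delta :: "'x \<Rightarrow> 'x \<Rightarrow> complex" where
  "delta p = (\<lambda>q. if q = p then 1 else 0)"

definition fspan :: "('x \<Rightarrow> complex) set \<Rightarrow> ('x \<Rightarrow> complex) set" where
  "fspan R = {g. \<exists>(n::nat) c r. (\<forall>i<n. r i \<in> R) \<and> g = (\<lambda>q. \<Sum>i<n. c i * r i q)}"

definition fmap :: "('x \<Rightarrow> 'y) \<Rightarrow> ('x \<Rightarrow> complex) \<Rightarrow> ('y \<Rightarrow> complex)" where
  "fmap g f = (\<lambda>q. \<Sum>p\<in>{p. f p \<noteq> 0}. if g p = q then f p else 0)"

definition fsum :: "(complex \<Rightarrow> 'a::comm_monoid_add \<Rightarrow> 'a) \<Rightarrow> ('x \<Rightarrow> complex) \<Rightarrow> ('x \<Rightarrow> 'a) \<Rightarrow> 'a" where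
  "fsum sc f h = (\<Sum>p\<in>{p. f p \<noteq> 0}. sc (f p) (h p))"

text \<open>Relations generating the kernel of Free(A x B) \<rightarrow> A \<otimes> B (tensor over complex numbers).\<close>
definition bil_rel :: "(complex \<Rightarrow> 'a::plus \<Rightarrow> 'a) \<Rightarrow> (complex \<Rightarrow> 'b::plus \<Rightarrow> 'b)
                       \<Rightarrow> ('a \<times> 'b \<Rightarrow> complex) set" where
  "bil_rel scA scB =
     {\<lambda>q. delta (a + a', b) q - delta (a, b) q - delta (a', b) q | a a' b. True} \<union>
     {\<lambda>q. delta (a, b + b') q - delta (a, b) q - delta (a, b') q | a b b'. True} \<union>
     {\<lambda>q. delta (scA c a, b) q - c * delta (a, b) q | c a b. True} \<union>
     {\<lambda>q. delta (a, scB c b) q - c * delta (a, b) q | c a b. True}"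

text \<open>Kernel of Free(A x A) \<rightarrow> _B A \<otimes> A^B.\<close>
definition balA_ker :: "(complex \<Rightarrow> 'a::ring \<Rightarrow> 'a) \<Rightarrow> ('b \<Rightarrow> 'a \<Rightarrow> 'a) \<Rightarrow> ('b \<Rightarrow> 'a \<Rightarrow> 'a)
                        \<Rightarrow> ('a \<times> 'a \<Rightarrow> complex) set" where
  "balA_ker scA s t = fspan (bil_rel scA scA \<union>
      {\<lambda>q. delta (s x a, b) q - delta (a, t x b) q | x a b. True})"

text \<open>B \<otimes> B^op, represented by Free(B x B) modulo bil_rel; equality of classes.\<close>
definition teq :: "(complex \<Rightarrow> 'b::ring \<Rightarrow> 'b) \<Rightarrow> ('b \<times> 'b \<Rightarrow> complex) \<Rightarrow> ('b \<times> 'b \<Rightarrow> complex) \<Rightarrow> bool" where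
  "teq scB f g \<longleftrightarrow> (\<lambda>q. f q - g q) \<in> fspan (bil_rel scB scB)"

text \<open>Multiplication of B \<otimes> B^op on representatives: (y \<otimes> z)(y' \<otimes> z') = yy' \<otimes> z'z.\<close>
definition bop_mul :: "('b::ring \<times> 'b \<Rightarrow> complex) \<Rightarrow> ('b \<times> 'b \<Rightarrow> complex) \<Rightarrow> ('b \<times> 'b \<Rightarrow> complex)" where
  "bop_mul f g = (\<lambda>q. \<Sum>p\<in>{p. f p \<noteq> 0}. \<Sum>p'\<in>{p. g p \<noteq> 0}.
       if (fst p * fst p', snd p' * snd p) = q then f p * g p' else 0)"

text \<open>Elements of M(B \<otimes> B^op): right module endomorphisms E (acting on representatives,
  compatible with the quotient) such that dE lies in B \<otimes> B^op for all d.\<close>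
definition in_M_BBop :: "(complex \<Rightarrow> 'b::ring \<Rightarrow> 'b) \<Rightarrow> (('b \<times> 'b \<Rightarrow> complex) \<Rightarrow> ('b \<times> 'b \<Rightarrow> complex)) \<Rightarrow> bool" where
  "in_M_BBop scB E \<longleftrightarrow>
     (\<forall>f. fsupp f \<longrightarrow> fsupp (E f)) \<and>
     (\<forall>f g. fsupp f \<and> fsupp g \<and> teq scB f g \<longrightarrow> teq scB (E f) (E g)) \<and>
     (\<forall>f g. fsupp f \<and> fsupp g \<longrightarrow> teq scB (E (\<lambda>q. f q + g q)) (\<lambda>q. E f q + E g q)) \<and>
     (\<forall>f c. fsupp f \<longrightarrow> teq scB (E (\<lambda>q. c * f q)) (\<lambda>q. c * E f q)) \<and>
     (\<forall>f g. fsupp f \<and> fsupp g \<longrightarrow> teq scB (E (bop_mul f g)) (bop_mul (E f) g)) \<and>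
     (\<forall>d. fsupp d \<longrightarrow> (\<exists>e. fsupp e \<and> (\<forall>f. fsupp f \<longrightarrow> teq scB (bop_mul d (E f)) (bop_mul e f))))"

text \<open>Left separability multiplier: E(x \<otimes> 1) = E(1 \<otimes> x^op) = d \<in> B \<otimes> B^op with m^op(d) = x.
  Here x \<otimes> 1 acts by y \<otimes> z \<mapsto> xy \<otimes> z and 1 \<otimes> x^op by y \<otimes> z \<mapsto> y \<otimes> zx.\<close>
definition left_sep_mult :: "(complex \<Rightarrow> 'b::ring \<Rightarrow> 'b) \<Rightarrow> (('b \<times> 'b \<Rightarrow> complex) \<Rightarrow> ('b \<times> 'b \<Rightarrow> complex)) \<Rightarrow> bool" where
  "left_sep_mult scB E \<longleftrightarrow> in_M_BBop scB E \<and>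
     (\<forall>x. \<exists>d. fsupp d \<and>
        (\<forall>f. fsupp f \<longrightarrow>
            teq scB (E (fmap (\<lambda>p. (x * fst p, snd p)) f)) (bop_mul d f) \<and>
            teq scB (E (fmap (\<lambda>p. (fst p, snd p * x)) f)) (bop_mul d f)) \<and>
        fsum scB d (\<lambda>p. snd p * fst p) = x)"

text \<open>B is firm: multiplication B \<otimes>_B B \<rightarrow> B is a linear isomorphism.\<close>
definition firm :: "(complex \<Rightarrow> 'b::ring \<Rightarrow> 'b) \<Rightarrow> bool" where
  "firm scB \<longleftrightarrow>
     (\<forall>b. \<exists>f. fsupp f \<and> fsum scB f (\<lambda>p. fst p * snd p) = b) \<and>
     (\<forall>f g. fsupp f \<and> fsupp g \<and> fsum scB f (\<lambda>p. fst p * snd p) = fsum scB g (\<lambda>p. fst p * snd p)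
        \<longrightarrow> (\<lambda>q. f q - g q) \<in> fspan (bil_rel scB scB \<union>
              {\<lambda>q. delta (x * y, z) q - delta (x, y * z) q | x y z. True}))"

text \<open>_B A (action x.a = s(x)a) is locally projective.\<close>
definition loc_proj_left :: "(complex \<Rightarrow> 'a::ring \<Rightarrow> 'a) \<Rightarrow> (complex \<Rightarrow> 'b::ring \<Rightarrow> 'b)
                               \<Rightarrow> ('b \<Rightarrow> 'a \<Rightarrow> 'a) \<Rightarrow> bool" where
  "loc_proj_left scA scB s \<longleftrightarrow> (\<forall>F. finite F \<longrightarrow>
     (\<exists>(n::nat) u m. (\<forall>i<n. clin scA scB (u i) \<and> (\<forall>x a. u i (s x a) = x * u i a) \<and>
                     clin scB scA (m i) \<and> (\<forall>x y. m i (x * y) = s x (m i y))) \<and>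
               (\<forall>a\<in>F. (\<Sum>i<n. m i (u i a)) = a)))"

text \<open>A^B (action a.x = t(x)a) is locally projective.\<close>
definition loc_proj_right :: "(complex \<Rightarrow> 'a::ring \<Rightarrow> 'a) \<Rightarrow> (complex \<Rightarrow> 'b::ring \<Rightarrow> 'b)
                               \<Rightarrow> ('b \<Rightarrow> 'a \<Rightarrow> 'a) \<Rightarrow> bool" where
  "loc_proj_right scA scB t \<longleftrightarrow> (\<forall>F. finite F \<longrightarrow>
     (\<exists>(n::nat) u m. (\<forall>i<n. clin scA scB (u i) \<and> (\<forall>x a. u i (t x a) = u i a * x) \<and>
                     clin scB scA (m i) \<and> (\<forall>x y. m i (y * x) = t x (m i y))) \<and>
               (\<forall>a\<in>F. (\<Sum>i<n. m i (u i a)) = a)))"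

end

theory Submission
  imports Defs "HOL-Library.Function_Algebras"
begin


definition fev :: "('x \<Rightarrow> complex) \<Rightarrow> ('x \<Rightarrow> complex) \<Rightarrow> complex" where
  "fev \<phi> f = (\<Sum>p\<in>{p. f p \<noteq> 0}. f p * \<phi> p)"

lemma fsum_superset:
  assumes "\<And>x. sc 0 x = 0" "finite T" "{p. f p \<noteq> 0} \<subseteq> T"
  shows "fsum sc f h = (\<Sum>p\<in>T. sc (f p) (h p))"
  unfolding fsum_def using assms by (intro sum.mono_neutral_left) auto

lemma fev_superset:
  assumes "finite T" "{p. f p \<noteq> 0} \<subseteq> T"
  shows "fev \<phi> f = (\<Sum>p\<in>T. f p * \<phi> p)"
  unfolding fev_def using assms by (intro sum.mono_neutral_left) auto

lemma fev_fsum: "fev \<phi> f = fsum (\<lambda>c z. c * z) f \<phi>"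
  unfolding fev_def fsum_def by simp

lemma sc_sum:
  assumes "\<And>c d x. sc (c + d) x = sc c x + sc d x" "\<And>x. sc 0 x = 0"
  shows "sc (\<Sum>i\<in>I. c i) x = (\<Sum>i\<in>I. sc (c i) x)"
  by (induction I rule: infinite_finite_induct) (auto simp: assms)

lemma fsupp_fmap: "fsupp f \<Longrightarrow> fsupp (fmap g f)"
proof -
  assume "fsupp f"
  then have fin: "finite {p. f p \<noteq> 0}" by (simp add: fsupp_def)
  have "{q. fmap g f q \<noteq> 0} \<subseteq> g ` {p. f p \<noteq> 0}"
  proof
    fix q assume "q \<in> {q. fmap g f q \<noteq> 0}"
    then have "(\<Sum>p\<in>{p. f p \<noteq> 0}. if g p = q then f p else 0) \<noteq> 0"
      by (simp add: fmap_def)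
    then obtain p where "p \<in> {p. f p \<noteq> 0}" "(if g p = q then f p else 0) \<noteq> 0"
      using sum.not_neutral_contains_not_neutral by blast
    then show "q \<in> g ` {p. f p \<noteq> 0}" by (auto split: if_splits)
  qed
  then show ?thesis unfolding fsupp_def using fin finite_subset by blast
qed

lemma supp_fmap: "{q. fmap g f q \<noteq> 0} \<subseteq> g ` {p. f p \<noteq> 0}"
proof
  fix q assume "q \<in> {q. fmap g f q \<noteq> 0}"
  then have "(\<Sum>p\<in>{p. f p \<noteq> 0}. if g p = q then f p else 0) \<noteq> 0"
    by (simp add: fmap_def)
  then obtain p where "p \<in> {p. f p \<noteq> 0}" "(if g p = q then f p else 0) \<noteq> 0"
    using sum.not_neutral_contains_not_neutral by blast
  then show "q \<in> g ` {p. f p \<noteq> 0}" by (auto split: if_splits)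
qed

lemma fsum_fmap:
  assumes add: "\<And>c d x. sc (c + d) x = sc c x + sc d x" and z: "\<And>x. sc 0 x = 0"
    and f: "fsupp f"
  shows "fsum sc (fmap g f) h = (\<Sum>p\<in>{p. f p \<noteq> 0}. sc (f p) (h (g p)))"
proof -
  let ?S = "{p. f p \<noteq> 0}"
  have fin: "finite ?S" using f by (simp add: fsupp_def)
  have "fsum sc (fmap g f) h = (\<Sum>q\<in>g ` ?S. sc (fmap g f q) (h q))"
    by (rule fsum_superset) (use fin supp_fmap[of g f] z in auto)
  also have "\<dots> = (\<Sum>q\<in>g ` ?S. \<Sum>p\<in>{p\<in>?S. g p = q}. sc (f p) (h (g p)))"
  proof (rule sum.cong[OF refl])
    fix q assume "q \<in> g ` ?S"
    have "fmap g f q = (\<Sum>p\<in>{p\<in>?S. g p = q}. f p)"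
      unfolding fmap_def using sum.inter_filter[OF fin, of f "\<lambda>p. g p = q"] by simp
    then have "sc (fmap g f q) (h q) = (\<Sum>p\<in>{p\<in>?S. g p = q}. sc (f p) (h q))"
      using sc_sum[where sc=sc, OF add z] by simp
    also have "\<dots> = (\<Sum>p\<in>{p\<in>?S. g p = q}. sc (f p) (h (g p)))"
      by (rule sum.cong) auto
    finally show "sc (fmap g f q) (h q) = (\<Sum>p\<in>{p\<in>?S. g p = q}. sc (f p) (h (g p)))" .
  qed
  also have "\<dots> = (\<Sum>p\<in>?S. sc (f p) (h (g p)))"
    by (rule sum.image_gen[OF fin, symmetric])
  finally show ?thesis .
qed

lemma fev_fmap: "fsupp f \<Longrightarrow> fev \<phi> (fmap g f) = (\<Sum>p\<in>{p. f p \<noteq> 0}. f p * \<phi> (g p))"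
  unfolding fev_fsum by (rule fsum_fmap) (auto simp: distrib_right)

lemma supp_delta: "{q. delta p q \<noteq> 0} = {p}"
  by (auto simp: delta_def)

lemma fsupp_delta: "fsupp (delta p)"
  by (simp add: fsupp_def supp_delta)

lemma sum_delta_in: "finite T \<Longrightarrow> p \<in> T \<Longrightarrow> (\<Sum>q\<in>T. delta p q * \<phi> q) = \<phi> p"
proof -
  assume "finite T" "p \<in> T"
  have "(\<Sum>q\<in>T. delta p q * \<phi> q) = (\<Sum>q\<in>T. if q = p then \<phi> q else 0)"
    by (rule sum.cong) (simp_all add: delta_def)
  then show ?thesis using \<open>finite T\<close> \<open>p \<in> T\<close> by simp
qed

lemma fmap_delta: "fmap g (delta p) = delta (g p)"
  unfolding fmap_def supp_delta by (auto simp: delta_def fun_eq_iff)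

lemma fev_delta: "fev \<phi> (delta p) = \<phi> p"
  unfolding fev_def supp_delta by (simp add: delta_def)

lemma fspan_fsupp:
  assumes R: "\<forall>r\<in>R. fsupp r" and g: "g \<in> fspan R"
  shows "fsupp g"
proof -
  obtain n :: nat and c r where r: "\<forall>i<n. r i \<in> R" and g: "g = (\<lambda>q. \<Sum>i<n. c i * r i q)"
    using g unfolding fspan_def by blast
  have "{q. g q \<noteq> 0} \<subseteq> (\<Union>i<n. {q. r i q \<noteq> 0})"
  proof
    fix q assume "q \<in> {q. g q \<noteq> 0}"
    then have "(\<Sum>i<n. c i * r i q) \<noteq> 0" using g by simp
    then obtain i where "i < n" "c i * r i q \<noteq> 0" using sum.not_neutral_contains_not_neutral by blast
    then show "q \<in> (\<Union>i<n. {q. r i q \<noteq> 0})" by auto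
  qed
  moreover have "finite (\<Union>i<n. {q. r i q \<noteq> 0})"
    using R r by (auto simp: fsupp_def)
  ultimately show ?thesis unfolding fsupp_def using finite_subset by blast
qed

lemma fev_fspan:
  assumes R: "\<forall>r\<in>R. fsupp r \<and> fev \<phi> r = 0" and g: "g \<in> fspan R"
  shows "fev \<phi> g = 0"
proof -
  obtain n :: nat and c r where r: "\<forall>i<n. r i \<in> R" and g: "g = (\<lambda>q. \<Sum>i<n. c i * r i q)"
    using g unfolding fspan_def by blast
  define T where "T = (\<Union>i<n. {q. r i q \<noteq> 0})"
  have finT: "finite T" unfolding T_def
  proof (rule finite_UN_I)
    show "finite {..<n}" by simp
    fix i assume "i \<in> {..<n}"
    then show "finite {q. r i q \<noteq> 0}" using R r by (simp add: fsupp_def)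
  qed
  have sub: "{q. g q \<noteq> 0} \<subseteq> T"
  proof
    fix q assume "q \<in> {q. g q \<noteq> 0}"
    then have "(\<Sum>i<n. c i * r i q) \<noteq> 0" using g by simp
    then obtain i where "i < n" "c i * r i q \<noteq> 0" using sum.not_neutral_contains_not_neutral by blast
    then show "q \<in> T" by (auto simp: T_def)
  qed
  have "fev \<phi> g = (\<Sum>q\<in>T. g q * \<phi> q)" by (rule fev_superset[OF finT sub])
  also have "\<dots> = (\<Sum>i<n. c i * (\<Sum>q\<in>T. r i q * \<phi> q))"
  proof -
    have "(\<Sum>q\<in>T. g q * \<phi> q) = (\<Sum>q\<in>T. \<Sum>i<n. c i * (r i q * \<phi> q))"
      unfolding g by (simp add: sum_distrib_right mult.assoc)
    also have "\<dots> = (\<Sum>i<n. \<Sum>q\<in>T. c i * (r i q * \<phi> q))"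
      by (rule sum.swap)
    also have "\<dots> = (\<Sum>i<n. c i * (\<Sum>q\<in>T. r i q * \<phi> q))"
      by (simp add: sum_distrib_left)
    finally show ?thesis .
  qed
  also have "\<dots> = (\<Sum>i<n. c i * fev \<phi> (r i))"
  proof (rule sum.cong[OF refl])
    fix i assume "i \<in> {..<n}"
    then have "fev \<phi> (r i) = (\<Sum>q\<in>T. r i q * \<phi> q)"
      by (intro fev_superset[OF finT]) (auto simp: T_def)
    then show "c i * (\<Sum>q\<in>T. r i q * \<phi> q) = c i * fev \<phi> (r i)" by simp
  qed
  also have "\<dots> = 0" using R r by (intro sum.neutral) simp
  finally show ?thesis .
qed


lemma fun_vs: "vector_space (\<lambda>(c::complex) (f::'x \<Rightarrow> complex) q. c * f q)"
  by unfold_locales (auto simp: fun_eq_iff algebra_simps)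

lemma complex_vs: "vector_space ((*) :: complex \<Rightarrow> complex \<Rightarrow> complex)"
  by unfold_locales (auto simp: algebra_simps)

lemma fun_sum_apply: "(sum f S) q = (\<Sum>i\<in>S. f i q)" for f :: "'i \<Rightarrow> 'x \<Rightarrow> complex"
  by (induction S rule: infinite_finite_induct) auto

lemma fsupp_expand:
  assumes "fsupp h"
  shows "h = (\<Sum>p\<in>{p. h p \<noteq> 0}. (\<lambda>q. h p * delta p q))"
proof
  fix q
  have fin: "finite {p. h p \<noteq> 0}" using assms by (simp add: fsupp_def)
  have "(\<Sum>p\<in>{p. h p \<noteq> 0}. (\<lambda>q. h p * delta p q)) q = (\<Sum>p\<in>{p. h p \<noteq> 0}. h p * delta p q)"
    by (rule fun_sum_apply)
  also have "\<dots> = (\<Sum>p\<in>{p. h p \<noteq> 0}. if p = q then h q else 0)"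
    by (rule sum.cong) (auto simp: delta_def)
  also have "\<dots> = h q" using fin by simp
  finally show "h q = (\<Sum>p\<in>{p. h p \<noteq> 0}. (\<lambda>q. h p * delta p q)) q" by simp
qed

lemma separation:
  fixes R :: "('x \<Rightarrow> complex) set"
  assumes R: "\<forall>r\<in>R. fsupp r" and w: "fsupp w" and nw: "w \<notin> fspan R"
  shows "\<exists>\<phi>. (\<forall>r\<in>R. fev \<phi> r = 0) \<and> fev \<phi> w \<noteq> 0"
proof -
  interpret V: vector_space "\<lambda>(c::complex) (f::'x \<Rightarrow> complex) q. c * f q" by (rule fun_vs)
  interpret P: vector_space_pair "\<lambda>(c::complex) (f::'x \<Rightarrow> complex) q. c * f q" "(*) :: complex \<Rightarrow> complex \<Rightarrow> complex"
    unfolding vector_space_pair_def using fun_vs complex_vs by auto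
  have spanR: "V.span R \<subseteq> fspan R"
  proof
    fix x assume "x \<in> V.span R"
    then show "x \<in> fspan R"
    proof (induction rule: V.span_induct_alt)
      case base
      show ?case unfolding fspan_def
        by (rule CollectI, rule exI[of _ "0::nat"]) (auto simp: fun_eq_iff)
    next
      case (step c x y)
      from step.IH obtain n :: nat and cc rr where rr: "\<forall>i<n. rr i \<in> R"
        and y: "y = (\<lambda>q. \<Sum>i<n. cc i * rr i q)"
        unfolding fspan_def by blast
      have "(\<lambda>q. c * x q) + y = (\<lambda>q. \<Sum>i<Suc n. (cc(n := c)) i * (rr(n := x)) i q)"
        unfolding y by (auto simp: fun_eq_iff)
      moreover have "\<forall>i<Suc n. (rr(n := x)) i \<in> R" using rr step.hyps by auto
      ultimately show ?case unfolding fspan_def by blast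
    qed
  qed
  obtain BK where BK: "BK \<subseteq> V.span R" "V.independent BK" "V.span R \<subseteq> V.span BK"
    using V.maximal_independent_subset by blast
  have "V.span BK \<subseteq> V.span R" using BK(1) V.span_minimal V.subspace_span by blast
  then have "w \<notin> V.span BK" using spanR nw by auto
  then have ind: "V.independent (insert w BK)" using V.independent_insertI BK(2) by auto
  obtain g where g: "Vector_Spaces.linear (\<lambda>(c::complex) (f::'x \<Rightarrow> complex) q. c * f q) (*) g"
    "\<forall>x\<in>insert w BK. g x = (if x = w then 1 else 0)"
    using P.linear_independent_extend[OF ind, where f="\<lambda>x. if x = w then 1 else 0"] by blast
  have gBK: "g x = 0" if "x \<in> V.span BK" for x
    using P.linear_eq_0_on_span[OF g(1) _ that] g(2) \<open>w \<notin> V.span BK\<close> V.span_base by fastforce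
  have gR: "g x = 0" if "x \<in> R" for x
    using gBK BK(3) V.span_base that by blast
  have ev_g: "fev (\<lambda>p. g (delta p)) h = g h" if h: "fsupp h" for h
  proof -
    have "g h = g (\<Sum>p\<in>{p. h p \<noteq> 0}. (\<lambda>q. h p * delta p q))"
      using fsupp_expand[OF h] by simp
    also have "\<dots> = (\<Sum>p\<in>{p. h p \<noteq> 0}. g (\<lambda>q. h p * delta p q))"
      by (rule P.linear_sum[OF g(1)])
    also have "\<dots> = (\<Sum>p\<in>{p. h p \<noteq> 0}. h p * g (delta p))"
      by (rule sum.cong[OF refl]) (use P.linear_scale[OF g(1)] in auto)
    finally show ?thesis unfolding fev_def by simp
  qed
  show ?thesis
  proof (intro exI[of _ "\<lambda>p. g (delta p)"] conjI ballI)
    fix r assume "r \<in> R"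
    then show "fev (\<lambda>p. g (delta p)) r = 0" using ev_g R gR by auto
  next
    show "fev (\<lambda>p. g (delta p)) w \<noteq> 0" using ev_g[OF w] g(2) by simp
  qed
qed

lemma LOC:
  assumes vs: "vector_space sc" and fin: "finite S"
  shows "\<exists>E g. finite E \<and> (\<forall>e. clin sc (\<lambda>c z. c * z) (g e)) \<and>
     (\<forall>b\<in>S. b = (\<Sum>e\<in>E. sc (g e b) e))"
proof -
  interpret V: vector_space sc by (rule vs)
  define BB where "BB = V.extend_basis {}"
  have ind: "V.independent BB" and sp: "V.span BB = UNIV"
    using V.independent_extend_basis[OF V.independent_empty] V.span_extend_basis[OF V.independent_empty]
    unfolding BB_def by auto
  define g where "g e v = V.representation BB v e" for e v
  define E where "E = (\<Union>b\<in>S. {e. V.representation BB b e \<noteq> 0})"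
  have finE: "finite E" unfolding E_def using fin V.finite_representation by auto
  have lin: "clin sc (\<lambda>c z. c * z) (g e)" for e
    using V.linear_representation[OF ind sp, of e] unfolding Vector_Spaces.linear_iff clin_def g_def by auto
  have rep: "b = (\<Sum>e\<in>E. sc (g e b) e)" if b: "b \<in> S" for b
  proof -
    have "b = (\<Sum>e | V.representation BB b e \<noteq> 0. sc (V.representation BB b e) e)"
      using V.sum_nonzero_representation_eq[OF ind] sp by auto
    also have "\<dots> = (\<Sum>e\<in>E. sc (g e b) e)"
      unfolding g_def
      by (rule sum.mono_neutral_left) (use finE b in \<open>auto simp: E_def\<close>)
    finally show ?thesis .
  qed
  show ?thesis using finE lin rep by blast
qed


lemma fev_d3: "fev \<phi> (\<lambda>q. delta x q - delta y q - delta z q) = \<phi> x - \<phi> y - \<phi> z"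
proof -
  have "fev \<phi> (\<lambda>q. delta x q - delta y q - delta z q) =
        (\<Sum>q\<in>{x,y,z}. (delta x q - delta y q - delta z q) * \<phi> q)"
    by (rule fev_superset) (auto simp: delta_def)
  also have "\<dots> = (\<Sum>q\<in>{x,y,z}. delta x q * \<phi> q) - (\<Sum>q\<in>{x,y,z}. delta y q * \<phi> q)
      - (\<Sum>q\<in>{x,y,z}. delta z q * \<phi> q)"
    by (simp add: left_diff_distrib sum_subtractf)
  also have "\<dots> = \<phi> x - \<phi> y - \<phi> z" by (simp add: sum_delta_in)
  finally show ?thesis .
qed

lemma fev_d2c: "fev \<phi> (\<lambda>q. delta x q - c * delta y q) = \<phi> x - c * \<phi> y"
proof -
  have "fev \<phi> (\<lambda>q. delta x q - c * delta y q) =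
        (\<Sum>q\<in>{x,y}. (delta x q - c * delta y q) * \<phi> q)"
    by (rule fev_superset) (auto simp: delta_def)
  also have "\<dots> = (\<Sum>q\<in>{x,y}. delta x q * \<phi> q) - c * (\<Sum>q\<in>{x,y}. delta y q * \<phi> q)"
    by (simp add: left_diff_distrib sum_subtractf sum_distrib_left mult.assoc)
  also have "\<dots> = \<phi> x - c * \<phi> y" by (simp add: sum_delta_in)
  finally show ?thesis .
qed

lemma fev_d2: "fev \<phi> (\<lambda>q. delta x q - delta y q) = \<phi> x - \<phi> y"
  using fev_d2c[of \<phi> x 1 y] by simp

lemma fsupp_d3: "fsupp (\<lambda>q. delta x q - delta y q - delta z q)"
  unfolding fsupp_def by (rule finite_subset[of _ "{x,y,z}"]) (auto simp: delta_def)

lemma fsupp_d2c: "fsupp (\<lambda>q. delta x q - c * delta y q)"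
  unfolding fsupp_def by (rule finite_subset[of _ "{x,y}"]) (auto simp: delta_def)

lemma fsupp_d2: "fsupp (\<lambda>q. delta x q - delta y q)"
  unfolding fsupp_def by (rule finite_subset[of _ "{x,y}"]) (auto simp: delta_def)

locale setting =
  fixes scA :: "complex \<Rightarrow> 'a::ring \<Rightarrow> 'a"
    and scB :: "complex \<Rightarrow> 'b::ring \<Rightarrow> 'b"
    and s t :: "'b \<Rightarrow> 'a \<Rightarrow> 'a"
  assumes algA: "calg scA" and algB: "calg scB"
    and A_nondeg: "\<forall>a::'a. (\<forall>b. a * b = 0) \<longrightarrow> a = 0"
    and s_M: "\<forall>x. in_MA scA (s x)"
    and s_hom: "\<forall>x y. s (x + y) = (\<lambda>a. s x a + s y a)"
               "\<forall>c x. s (scB c x) = (\<lambda>a. scA c (s x a))"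
               "\<forall>x y. s (x * y) = s x \<circ> s y"
    and t_M: "\<forall>x. in_MA scA (t x)"
    and t_antihom: "\<forall>x y. t (x + y) = (\<lambda>a. t x a + t y a)"
               "\<forall>c x. t (scB c x) = (\<lambda>a. scA c (t x a))"
               "\<forall>x y. t (x * y) = t y \<circ> t x"
    and s_idem: "\<forall>a. a \<in> cspan scA {s x b | x b. True}"
    and t_idem: "\<forall>a. a \<in> cspan scA {t x b | x b. True}"
begin

lemma vsA: "vector_space scA"
  using algA unfolding calg_def by unfold_locales auto

lemma scA_add: "scA c (x + y) = scA c x + scA c y"
  and scA_addl: "scA (c + d) x = scA c x + scA d x"
  and scA_sc: "scA c (scA d x) = scA (c * d) x"
  and scA_1: "scA 1 x = x"
  using algA unfolding calg_def by auto
lemma scA_mult: "scA c (x * y) = scA c x * y" "scA c (x * y) = x * scA c y"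
  using algA unfolding calg_def by blast+

lemma scB_add: "scB c (x + y) = scB c x + scB c y"
  and scB_addl: "scB (c + d) x = scB c x + scB d x"
  and scB_sc: "scB c (scB d x) = scB (c * d) x"
  and scB_1: "scB 1 x = x"
  using algB unfolding calg_def by auto
lemma scB_mult: "scB c (x * y) = scB c x * y" "scB c (x * y) = x * scB c y"
  using algB unfolding calg_def by blast+

lemma scA_0l[simp]: "scA 0 x = 0"
  using scA_addl[of 0 0 x] by simp
lemma scA_0r[simp]: "scA c 0 = 0"
  using scA_add[of c 0 0] by simp
lemma scB_0l[simp]: "scB 0 x = 0"
  using scB_addl[of 0 0 x] by simp
lemma scB_0r[simp]: "scB c 0 = 0"
  using scB_add[of c 0 0] by simp

lemma scA_sum: "scA c (\<Sum>i\<in>I. x i) = (\<Sum>i\<in>I. scA c (x i))"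
  by (induction I rule: infinite_finite_induct) (auto simp: scA_add)
lemma scA_suml: "scA (\<Sum>i\<in>I. c i) x = (\<Sum>i\<in>I. scA (c i) x)"
  by (induction I rule: infinite_finite_induct) (auto simp: scA_addl)
lemma scB_sum: "scB c (\<Sum>i\<in>I. x i) = (\<Sum>i\<in>I. scB c (x i))"
  by (induction I rule: infinite_finite_induct) (auto simp: scB_add)
lemma scB_suml: "scB (\<Sum>i\<in>I. c i) x = (\<Sum>i\<in>I. scB (c i) x)"
  by (induction I rule: infinite_finite_induct) (auto simp: scB_addl)

lemma sum_mult_right: "(\<Sum>i\<in>I. x i) * (c::'a) = (\<Sum>i\<in>I. x i * c)"
  by (rule sum_distrib_right)

definition lin :: "('a \<Rightarrow> complex) \<Rightarrow> bool" where
  "lin f \<longleftrightarrow> clin scA (\<lambda>c z. c * z) f"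

lemma lin_add: "lin f \<Longrightarrow> f (x + y) = f x + f y"
  and lin_sc: "lin f \<Longrightarrow> f (scA c x) = c * f x"
  unfolding lin_def clin_def by auto

lemma lin_0: "lin f \<Longrightarrow> f 0 = 0"
  using lin_sc[of f 0 0] by simp

lemma lin_sum: "lin f \<Longrightarrow> f (\<Sum>i\<in>I. scA (\<mu> i) (x i)) = (\<Sum>i\<in>I. \<mu> i * f (x i))"
  by (induction I rule: infinite_finite_induct) (auto simp: lin_add lin_sc lin_0)

lemma LOC_A: "finite S \<Longrightarrow> \<exists>E g. finite E \<and> (\<forall>e. lin (g e)) \<and> (\<forall>b\<in>S. b = (\<Sum>e\<in>E. scA (g e b) e))"
  using LOC[OF vsA] unfolding lin_def by blast

lemma sepA: assumes "\<forall>f. lin f \<longrightarrow> f x = 0" shows "x = 0"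
proof -
  obtain E g where E: "finite E" "\<forall>e. lin (g e)" "x = (\<Sum>e\<in>E. scA (g e x) e)"
    using LOC_A[of "{x}"] by auto
  have "g e x = 0" for e using assms E(2) by auto
  then show ?thesis using E(3) by simp
qed

definition bil :: "('a \<Rightarrow> 'a \<Rightarrow> complex) \<Rightarrow> bool" where
  "bil \<beta> \<longleftrightarrow> (\<forall>a a' b. \<beta> (a + a') b = \<beta> a b + \<beta> a' b) \<and> (\<forall>a b b'. \<beta> a (b + b') = \<beta> a b + \<beta> a b')
      \<and> (\<forall>c a b. \<beta> (scA c a) b = c * \<beta> a b) \<and> (\<forall>c a b. \<beta> a (scA c b) = c * \<beta> a b)"

definition bal :: "('a \<Rightarrow> 'a \<Rightarrow> complex) \<Rightarrow> bool" where
  "bal \<beta> \<longleftrightarrow> bil \<beta> \<and> (\<forall>x a b. \<beta> (s x a) b = \<beta> a (t x b))"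

lemma bil_lin1: "bil \<beta> \<Longrightarrow> lin (\<lambda>a. \<beta> a b)"
  and bil_lin2: "bil \<beta> \<Longrightarrow> lin (\<lambda>b. \<beta> a b)"
  unfolding bil_def lin_def clin_def by auto

lemma bil_sum1: "bil \<beta> \<Longrightarrow> \<beta> (\<Sum>i\<in>I. scA (\<mu> i) (x i)) b = (\<Sum>i\<in>I. \<mu> i * \<beta> (x i) b)"
  using lin_sum[OF bil_lin1] by blast
lemma bil_sum2: "bil \<beta> \<Longrightarrow> \<beta> a (\<Sum>i\<in>I. scA (\<mu> i) (x i)) = (\<Sum>i\<in>I. \<mu> i * \<beta> a (x i))"
  using lin_sum[OF bil_lin2] by blast
lemma bil_0: "bil \<beta> \<Longrightarrow> \<beta> 0 b = 0" "bil \<beta> \<Longrightarrow> \<beta> a 0 = 0"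
  using lin_0[OF bil_lin1] lin_0[OF bil_lin2] by blast+

lemma bil_prod: "lin f \<Longrightarrow> lin g \<Longrightarrow> bil (\<lambda>a b. f a * g b)"
  unfolding bil_def by (auto simp: lin_add lin_sc algebra_simps)

abbreviation K where "K \<equiv> balA_ker scA s t"

definition relK where "relK = bil_rel scA scA \<union>
      {\<lambda>q. delta (s x a, b) q - delta (a, t x b) q | x a b. True}"

lemma K_def': "K = fspan relK" unfolding balA_ker_def relK_def by simp

lemma relK_fsupp: "\<forall>r\<in>relK. fsupp r"
  unfolding relK_def bil_rel_def by (auto simp: fsupp_d3 fsupp_d2c fsupp_d2)

abbreviation fev2 :: "('a \<Rightarrow> 'a \<Rightarrow> complex) \<Rightarrow> ('a \<times> 'a \<Rightarrow> complex) \<Rightarrow> complex" where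
  "fev2 \<beta> \<equiv> fev (\<lambda>p. \<beta> (fst p) (snd p))"

lemma bal_kills: assumes "bal \<beta>" "v \<in> K" shows "fev2 \<beta> v = 0"
proof (rule fev_fspan[of relK])
  show "v \<in> fspan relK" using assms(2) K_def' by simp
  show "\<forall>r\<in>relK. fsupp r \<and> fev2 \<beta> r = 0"
    using assms(1) unfolding relK_def bil_rel_def bal_def bil_def
    by (auto simp: fsupp_d3 fsupp_d2c fsupp_d2 fev_d3 fev_d2c fev_d2)
qed

lemma sep_K:
  assumes w: "fsupp w" and H: "\<forall>\<beta>. bal \<beta> \<longrightarrow> fev2 \<beta> w = 0"
  shows "w \<in> K"
proof (rule ccontr)
  assume "w \<notin> K"
  then obtain \<phi> where \<phi>: "\<forall>r\<in>relK. fev \<phi> r = 0" "fev \<phi> w \<noteq> 0"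
    using separation[OF relK_fsupp w] K_def' by auto
  define \<beta> where "\<beta> a b = \<phi> (a, b)" for a b
  have "bal \<beta>"
  proof -
    have r: "fev \<phi> r = 0" if "r \<in> relK" for r using \<phi> that by auto
    have 1: "\<phi> (a + a', b) - \<phi> (a, b) - \<phi> (a', b) = 0" for a a' b
      using r[of "\<lambda>q. delta (a + a', b) q - delta (a, b) q - delta (a', b) q"]
      unfolding relK_def bil_rel_def fev_d3 by blast
    have 2: "\<phi> (a, b + b') - \<phi> (a, b) - \<phi> (a, b') = 0" for a b b'
      using r[of "\<lambda>q. delta (a, b + b') q - delta (a, b) q - delta (a, b') q"]
      unfolding relK_def bil_rel_def fev_d3 by blast
    have 3: "\<phi> (scA c a, b) - c * \<phi> (a, b) = 0" for c a b
      using r[of "\<lambda>q. delta (scA c a, b) q - c * delta (a, b) q"]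
      unfolding relK_def bil_rel_def fev_d2c by blast
    have 4: "\<phi> (a, scA c b) - c * \<phi> (a, b) = 0" for c a b
      using r[of "\<lambda>q. delta (a, scA c b) q - c * delta (a, b) q"]
      unfolding relK_def bil_rel_def fev_d2c by blast
    have 5: "\<phi> (s x a, b) - \<phi> (a, t x b) = 0" for x a b
      using r[of "\<lambda>q. delta (s x a, b) q - delta (a, t x b) q"]
      unfolding relK_def fev_d2 by blast
    show ?thesis unfolding bal_def bil_def \<beta>_def
      using 1 2 3 4 5 by (auto simp: algebra_simps)
  qed
  moreover have "fev2 \<beta> w = fev \<phi> w" unfolding \<beta>_def by simp
  ultimately show False using H \<phi>(2) by auto
qed

lemma ND1:
  assumes fin: "finite I"
    and H: "\<forall>\<gamma> c. bil \<gamma> \<longrightarrow> (\<Sum>i\<in>I. wt i * \<gamma> (a i * c) (b i)) = 0"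
    and g: "bil \<gamma>"
  shows "(\<Sum>i\<in>I. wt i * \<gamma> (a i) (b i)) = 0"
proof -
  obtain E g where E: "finite E" "\<forall>e. lin (g e)" "\<forall>x\<in>b ` I. x = (\<Sum>e\<in>E. scA (g e x) e)"
    using LOC_A[of "b ` I"] fin by auto
  define \<alpha> where "\<alpha> e = (\<Sum>i\<in>I. scA (wt i * g e (b i)) (a i))" for e
  have \<alpha>0: "\<alpha> e = 0" for e
  proof -
    have "\<alpha> e * c = 0" for c
    proof (rule sepA, intro allI impI)
      fix f assume f: "lin f"
      have "\<alpha> e * c = (\<Sum>i\<in>I. scA (wt i * g e (b i)) (a i * c))"
        unfolding \<alpha>_def sum_distrib_right by (simp add: scA_mult)
      then have "f (\<alpha> e * c) = (\<Sum>i\<in>I. (wt i * g e (b i)) * f (a i * c))"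
        using lin_sum[OF f] by simp
      also have "\<dots> = (\<Sum>i\<in>I. wt i * (\<lambda>x y. f x * g e y) (a i * c) (b i))"
        by (simp add: algebra_simps)
      also have "\<dots> = 0" using H bil_prod[OF f E(2)[rule_format, of e]] by blast
      finally show "f (\<alpha> e * c) = 0" .
    qed
    then show ?thesis using A_nondeg by blast
  qed
  have "(\<Sum>i\<in>I. wt i * \<gamma> (a i) (b i)) = (\<Sum>i\<in>I. wt i * \<gamma> (a i) (\<Sum>e\<in>E. scA (g e (b i)) e))"
    using E(3) by (intro sum.cong) auto
  also have "\<dots> = (\<Sum>i\<in>I. \<Sum>e\<in>E. wt i * g e (b i) * \<gamma> (a i) e)"
    by (simp add: bil_sum2[OF g] sum_distrib_left mult.assoc)
  also have "\<dots> = (\<Sum>e\<in>E. \<Sum>i\<in>I. wt i * g e (b i) * \<gamma> (a i) e)"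
    by (rule sum.swap)
  also have "\<dots> = (\<Sum>e\<in>E. \<gamma> (\<alpha> e) e)"
    unfolding \<alpha>_def by (simp add: bil_sum1[OF g])
  also have "\<dots> = 0" by (simp add: \<alpha>0 bil_0[OF g])
  finally show ?thesis .
qed

lemma ND2:
  assumes fin: "finite I"
    and H: "\<forall>\<gamma> c. bil \<gamma> \<longrightarrow> (\<Sum>i\<in>I. wt i * \<gamma> (a i) (b i * c)) = 0"
    and g: "bil \<gamma>"
  shows "(\<Sum>i\<in>I. wt i * \<gamma> (a i) (b i)) = 0"
proof -
  obtain E g where E: "finite E" "\<forall>e. lin (g e)" "\<forall>x\<in>a ` I. x = (\<Sum>e\<in>E. scA (g e x) e)"
    using LOC_A[of "a ` I"] fin by auto
  define \<alpha> where "\<alpha> e = (\<Sum>i\<in>I. scA (wt i * g e (a i)) (b i))" for e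
  have \<alpha>0: "\<alpha> e = 0" for e
  proof -
    have "\<alpha> e * c = 0" for c
    proof (rule sepA, intro allI impI)
      fix f assume f: "lin f"
      have "\<alpha> e * c = (\<Sum>i\<in>I. scA (wt i * g e (a i)) (b i * c))"
        unfolding \<alpha>_def sum_distrib_right by (simp add: scA_mult)
      then have "f (\<alpha> e * c) = (\<Sum>i\<in>I. (wt i * g e (a i)) * f (b i * c))"
        using lin_sum[OF f] by simp
      also have "\<dots> = (\<Sum>i\<in>I. wt i * (\<lambda>x y. g e x * f y) (a i) (b i * c))"
        by (simp add: algebra_simps)
      also have "\<dots> = 0" using H bil_prod[OF E(2)[rule_format, of e] f] by blast
      finally show "f (\<alpha> e * c) = 0" .
    qed
    then show ?thesis using A_nondeg by blast
  qed
  have "(\<Sum>i\<in>I. wt i * \<gamma> (a i) (b i)) = (\<Sum>i\<in>I. wt i * \<gamma> (\<Sum>e\<in>E. scA (g e (a i)) e) (b i))"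
    using E(3) by (intro sum.cong) auto
  also have "\<dots> = (\<Sum>i\<in>I. \<Sum>e\<in>E. wt i * g e (a i) * \<gamma> e (b i))"
    by (simp add: bil_sum1[OF g] sum_distrib_left mult.assoc)
  also have "\<dots> = (\<Sum>e\<in>E. \<Sum>i\<in>I. wt i * g e (a i) * \<gamma> e (b i))"
    by (rule sum.swap)
  also have "\<dots> = (\<Sum>e\<in>E. \<gamma> e (\<alpha> e))"
    unfolding \<alpha>_def by (simp add: bil_sum2[OF g])
  also have "\<dots> = 0" by (simp add: \<alpha>0 bil_0[OF g])
  finally show ?thesis .
qed

end


lemma fsupp_lincomb:
  assumes "finite Ks" "\<forall>k\<in>Ks. fsupp (f k)"
  shows "fsupp (\<lambda>q. \<Sum>k\<in>Ks. \<mu> k * f k q)"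
proof -
  have "{q. (\<Sum>k\<in>Ks. \<mu> k * f k q) \<noteq> 0} \<subseteq> (\<Union>k\<in>Ks. {q. f k q \<noteq> 0})"
  proof
    fix q assume "q \<in> {q. (\<Sum>k\<in>Ks. \<mu> k * f k q) \<noteq> 0}"
    then obtain k where "k \<in> Ks" "\<mu> k * f k q \<noteq> 0"
      using sum.not_neutral_contains_not_neutral by blast
    then show "q \<in> (\<Union>k\<in>Ks. {q. f k q \<noteq> 0})" by auto
  qed
  moreover have "finite (\<Union>k\<in>Ks. {q. f k q \<noteq> 0})"
    using assms by (auto simp: fsupp_def)
  ultimately show ?thesis unfolding fsupp_def using finite_subset by blast
qed

lemma fsum_lincomb:
  assumes fin: "finite Ks" and f: "\<forall>k\<in>Ks. fsupp (f k)"
    and z: "\<And>x. sc 0 x = 0" and addl: "\<And>c d x. sc (c + d) x = sc c x + sc d x"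
    and addr: "\<And>c x y. sc c (x + y) = sc c x + sc c y"
    and scc: "\<And>c d x. sc c (sc d x) = sc (c * d) x" and z2: "\<And>c. sc c 0 = 0"
  shows "fsum sc (\<lambda>q. \<Sum>k\<in>Ks. \<mu> k * f k q) h = (\<Sum>k\<in>Ks. sc (\<mu> k) (fsum sc (f k) h))"
proof -
  define T where "T = (\<Union>k\<in>Ks. {q. f k q \<noteq> 0})"
  have finT: "finite T" using fin f by (auto simp: fsupp_def T_def)
  have sub: "{q. (\<Sum>k\<in>Ks. \<mu> k * f k q) \<noteq> 0} \<subseteq> T"
  proof
    fix q assume "q \<in> {q. (\<Sum>k\<in>Ks. \<mu> k * f k q) \<noteq> 0}"
    then obtain k where "k \<in> Ks" "\<mu> k * f k q \<noteq> 0"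
      using sum.not_neutral_contains_not_neutral by blast
    then show "q \<in> T" by (auto simp: T_def)
  qed
  have sumr: "sc c (\<Sum>i\<in>I. x i) = (\<Sum>i\<in>I. sc c (x i))" for c I x
  proof (induction I rule: infinite_finite_induct)
    case (infinite A) then show ?case using z2 by simp
  next
    case empty then show ?case using z2 by simp
  next
    case (insert x F) then show ?case by (simp add: addr)
  qed
  have "fsum sc (\<lambda>q. \<Sum>k\<in>Ks. \<mu> k * f k q) h = (\<Sum>q\<in>T. sc (\<Sum>k\<in>Ks. \<mu> k * f k q) (h q))"
    by (rule fsum_superset[OF _ finT sub]) (rule z)
  also have "\<dots> = (\<Sum>q\<in>T. \<Sum>k\<in>Ks. sc (\<mu> k) (sc (f k q) (h q)))"
    by (simp add: sc_sum[where sc=sc, OF addl z] scc)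
  also have "\<dots> = (\<Sum>k\<in>Ks. \<Sum>q\<in>T. sc (\<mu> k) (sc (f k q) (h q)))"
    by (rule sum.swap)
  also have "\<dots> = (\<Sum>k\<in>Ks. sc (\<mu> k) (fsum sc (f k) h))"
  proof (rule sum.cong[OF refl])
    fix k assume k: "k \<in> Ks"
    have "fsum sc (f k) h = (\<Sum>q\<in>T. sc (f k q) (h q))"
      by (rule fsum_superset[OF _ finT]) (use z k in \<open>auto simp: T_def\<close>)
    then show "(\<Sum>q\<in>T. sc (\<mu> k) (sc (f k q) (h q))) = sc (\<mu> k) (fsum sc (f k) h)"
      by (simp add: sumr)
  qed
  finally show ?thesis .
qed

lemma fev_lincomb:
  assumes fin: "finite Ks" and f: "\<forall>k\<in>Ks. fsupp (f k)"
  shows "fev \<phi> (\<lambda>q. \<Sum>k\<in>Ks. \<mu> k * f k q) = (\<Sum>k\<in>Ks. \<mu> k * fev \<phi> (f k))"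
  unfolding fev_fsum by (rule fsum_lincomb[OF fin f]) (auto simp: algebra_simps)

lemma fev_diff:
  assumes "fsupp f" "fsupp g"
  shows "fev \<phi> (\<lambda>q. f q - g q) = fev \<phi> f - fev \<phi> g"
proof -
  have "fev \<phi> (\<lambda>q. \<Sum>k\<in>{True, False}. (if k then 1 else -1) * (if k then f else g) q) =
        (\<Sum>k\<in>{True, False}. (if k then 1 else -1) * fev \<phi> (if k then f else g))"
    by (rule fev_lincomb) (use assms in auto)
  then show ?thesis by simp
qed

context setting begin

lemma s_lin: "clin scA scA (s x)" using s_M unfolding in_MA_def by blast
lemma s_adda: "s x (a + b) = s x a + s x b" using s_lin unfolding clin_def by blast
lemma s_sca: "s x (scA c a) = scA c (s x a)" using s_lin unfolding clin_def by blast
lemma s_mult: "s x (a * b) = s x a * b" using s_M unfolding in_MA_def by blast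
lemma s_0a[simp]: "s x 0 = 0" using s_sca[of x 0 0] by simp
lemma s_suma: "s x (\<Sum>i\<in>I. scA (\<mu> i) (a i)) = (\<Sum>i\<in>I. scA (\<mu> i) (s x (a i)))"
  by (induction I rule: infinite_finite_induct) (auto simp: s_adda s_sca)
lemma s_addB: "s (x + y) a = s x a + s y a" using s_hom(1) by metis
lemma s_scB: "s (scB c x) a = scA c (s x a)" using s_hom(2) by metis
lemma s_comp: "s (x * y) a = s x (s y a)" using s_hom(3) by simp
lemma s_0B[simp]: "s 0 a = 0" using s_scB[of 0 0 a] by simp
lemma s_sumB: "s (\<Sum>i\<in>I. scB (\<mu> i) (x i)) a = (\<Sum>i\<in>I. scA (\<mu> i) (s (x i) a))"
  by (induction I rule: infinite_finite_induct) (auto simp: s_addB s_scB)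

lemma t_lin: "clin scA scA (t x)" using t_M unfolding in_MA_def by blast
lemma t_adda: "t x (a + b) = t x a + t x b" using t_lin unfolding clin_def by blast
lemma t_sca: "t x (scA c a) = scA c (t x a)" using t_lin unfolding clin_def by blast
lemma t_mult: "t x (a * b) = t x a * b" using t_M unfolding in_MA_def by blast
lemma t_0a[simp]: "t x 0 = 0" using t_sca[of x 0 0] by simp
lemma t_suma: "t x (\<Sum>i\<in>I. scA (\<mu> i) (a i)) = (\<Sum>i\<in>I. scA (\<mu> i) (t x (a i)))"
  by (induction I rule: infinite_finite_induct) (auto simp: t_adda t_sca)
lemma t_addB: "t (x + y) a = t x a + t y a" using t_antihom(1) by metis
lemma t_scB: "t (scB c x) a = scA c (t x a)" using t_antihom(2) by metis
lemma t_comp: "t (x * y) a = t y (t x a)" using t_antihom(3) by simp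
lemma t_0B[simp]: "t 0 a = 0" using t_scB[of 0 0 a] by simp
lemma t_sumB: "t (\<Sum>i\<in>I. scB (\<mu> i) (x i)) a = (\<Sum>i\<in>I. scA (\<mu> i) (t (x i) a))"
  by (induction I rule: infinite_finite_induct) (auto simp: t_addB t_scB)

lemma sdec: obtains n :: nat and \<mu> X Y where "a = (\<Sum>k<n. scA (\<mu> k) (s (X k) (Y k)))"
proof -
  obtain n :: nat and c v where v: "\<forall>i<n. v i \<in> {s x b | x b. True}" and a: "a = (\<Sum>i<n. scA (c i) (v i))"
    using s_idem unfolding cspan_def by blast
  have "\<forall>i. \<exists>x b. i < n \<longrightarrow> v i = s x b" using v by blast
  then obtain X Y where "\<forall>i. i < n \<longrightarrow> v i = s (X i) (Y i)" by metis
  then have "a = (\<Sum>i<n. scA (c i) (s (X i) (Y i)))" using a by simp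
  then show ?thesis using that by blast
qed

lemma tdec: obtains n :: nat and \<mu> X Y where "a = (\<Sum>k<n. scA (\<mu> k) (t (X k) (Y k)))"
proof -
  obtain n :: nat and c v where v: "\<forall>i<n. v i \<in> {t x b | x b. True}" and a: "a = (\<Sum>i<n. scA (c i) (v i))"
    using t_idem unfolding cspan_def by blast
  have "\<forall>i. \<exists>x b. i < n \<longrightarrow> v i = t x b" using v by blast
  then obtain X Y where "\<forall>i. i < n \<longrightarrow> v i = t (X i) (Y i)" by metis
  then have "a = (\<Sum>i<n. scA (c i) (t (X i) (Y i)))" using a by simp
  then show ?thesis using that by blast
qed

lemma lin_sum_plain: "lin f \<Longrightarrow> f (\<Sum>i\<in>I. x i) = (\<Sum>i\<in>I. f (x i))"
  by (induction I rule: infinite_finite_induct) (auto simp: lin_add lin_0)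

lemma bil_sum1p: "bil \<beta> \<Longrightarrow> \<beta> (\<Sum>i\<in>I. x i) b = (\<Sum>i\<in>I. \<beta> (x i) b)"
  using lin_sum_plain[OF bil_lin1] by blast
lemma bil_sum2p: "bil \<beta> \<Longrightarrow> \<beta> a (\<Sum>i\<in>I. x i) = (\<Sum>i\<in>I. \<beta> a (x i))"
  using lin_sum_plain[OF bil_lin2] by blast

lemma case1_1:
  assumes lu: "\<forall>F::'a set. finite F \<longrightarrow> (\<exists>e. \<forall>a\<in>F. a * e = a)" and fin: "finite I"
    and H: "\<forall>\<beta> c. bal \<beta> \<longrightarrow> (\<Sum>i\<in>I. wt i * \<beta> (a i * c) (b i)) = 0" and bt: "bal \<beta>"
  shows "(\<Sum>i\<in>I. wt i * \<beta> (a i) (b i)) = 0"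
proof -
  obtain e where e: "\<forall>x\<in>a ` I. x * e = x" using lu fin by blast
  have "(\<Sum>i\<in>I. wt i * \<beta> (a i) (b i)) = (\<Sum>i\<in>I. wt i * \<beta> (a i * e) (b i))"
    using e by (intro sum.cong) auto
  then show ?thesis using H bt by simp
qed

lemma case1_2:
  assumes lu: "\<forall>F::'a set. finite F \<longrightarrow> (\<exists>e. \<forall>a\<in>F. a * e = a)" and fin: "finite I"
    and H: "\<forall>\<beta> c. bal \<beta> \<longrightarrow> (\<Sum>i\<in>I. wt i * \<beta> (a i) (b i * c)) = 0" and bt: "bal \<beta>"
  shows "(\<Sum>i\<in>I. wt i * \<beta> (a i) (b i)) = 0"
proof -
  obtain e where e: "\<forall>x\<in>b ` I. x * e = x" using lu fin by blast
  have "(\<Sum>i\<in>I. wt i * \<beta> (a i) (b i)) = (\<Sum>i\<in>I. wt i * \<beta> (a i) (b i * e))"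
    using e by (intro sum.cong) auto
  then show ?thesis using H bt by simp
qed

end


context setting begin

lemma clinAB_0: assumes "clin scA scB f" shows "f 0 = 0"
proof -
  have "f (scA 0 0) = scB 0 (f 0)" using assms unfolding clin_def by blast
  then show ?thesis by simp
qed

lemma clinBA_0: assumes "clin scB scA f" shows "f 0 = 0"
proof -
  have "f (scB 0 0) = scA 0 (f 0)" using assms unfolding clin_def by blast
  then show ?thesis by simp
qed

lemma clinAB_sum: assumes c: "clin scA scB f"
  shows "f (\<Sum>i\<in>I. scA (\<mu> i) (x i)) = (\<Sum>i\<in>I. scB (\<mu> i) (f (x i)))"
proof (induction I rule: infinite_finite_induct)
  case (insert y F)
  have "f (scA (\<mu> y) (x y) + (\<Sum>i\<in>F. scA (\<mu> i) (x i))) = f (scA (\<mu> y) (x y)) + f (\<Sum>i\<in>F. scA (\<mu> i) (x i))"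
    using c unfolding clin_def by blast
  moreover have "f (scA (\<mu> y) (x y)) = scB (\<mu> y) (f (x y))" using c unfolding clin_def by blast
  ultimately show ?case using insert by simp
qed (simp_all add: clinAB_0[OF c])

lemma clinBA_sum: assumes c: "clin scB scA f"
  shows "f (\<Sum>i\<in>I. scB (\<mu> i) (x i)) = (\<Sum>i\<in>I. scA (\<mu> i) (f (x i)))"
proof (induction I rule: infinite_finite_induct)
  case (insert y F)
  have "f (scB (\<mu> y) (x y) + (\<Sum>i\<in>F. scB (\<mu> i) (x i))) = f (scB (\<mu> y) (x y)) + f (\<Sum>i\<in>F. scB (\<mu> i) (x i))"
    using c unfolding clin_def by blast
  moreover have "f (scB (\<mu> y) (x y)) = scA (\<mu> y) (f (x y))" using c unfolding clin_def by blast
  ultimately show ?case using insert by simp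
qed (simp_all add: clinBA_0[OF c])

lemma clin_0: "clin scA scB f \<Longrightarrow> f 0 = 0"
  by (rule clinAB_0)

definition spl :: "'b \<Rightarrow> ('b \<times> 'b \<Rightarrow> complex)" where
  "spl y = (SOME f. fsupp f \<and> fsum scB f (\<lambda>p. fst p * snd p) = y)"

lemma spl: assumes "firm scB"
  shows "fsupp (spl y)" "fsum scB (spl y) (\<lambda>p. fst p * snd p) = y"
proof -
  have "\<exists>f. fsupp f \<and> fsum scB f (\<lambda>p. fst p * snd p) = y" using assms unfolding firm_def by blast
  then have "fsupp (spl y) \<and> fsum scB (spl y) (\<lambda>p. fst p * snd p) = y"
    unfolding spl_def by (rule someI_ex)
  then show "fsupp (spl y)" "fsum scB (spl y) (\<lambda>p. fst p * snd p) = y" by auto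
qed

definition Rel :: "('b \<times> 'b \<Rightarrow> complex) set" where
  "Rel = bil_rel scB scB \<union> {\<lambda>q. delta (x * y, z) q - delta (x, y * z) q | x y z. True}"

lemma Rel_fsupp: "\<forall>r\<in>Rel. fsupp r"
  unfolding Rel_def bil_rel_def by (auto simp: fsupp_d3 fsupp_d2c fsupp_d2)

lemma firm_inv:
  assumes fm: "firm scB" and f: "fsupp f" and g: "fsupp g"
    and eq: "fsum scB f (\<lambda>p. fst p * snd p) = fsum scB g (\<lambda>p. fst p * snd p)"
    and kill: "\<forall>r\<in>Rel. fev \<phi> r = 0"
  shows "fev \<phi> f = fev \<phi> g"
proof -
  have fi: "\<forall>f g. fsupp f \<and> fsupp g \<and> fsum scB f (\<lambda>p. fst p * snd p) = fsum scB g (\<lambda>p. fst p * snd p)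
        \<longrightarrow> (\<lambda>q. f q - g q) \<in> fspan Rel"
    using fm unfolding firm_def Rel_def by (rule conjunct2)
  have "(\<lambda>q. f q - g q) \<in> fspan Rel" using fi f g eq by blast
  then have "fev \<phi> (\<lambda>q. f q - g q) = 0" using fev_fspan[of Rel \<phi>] Rel_fsupp kill by blast
  then show ?thesis using fev_diff[OF f g] by simp
qed

definition cond :: "('a \<Rightarrow> 'a \<Rightarrow> complex) \<Rightarrow> ('b \<Rightarrow> 'a) \<Rightarrow> ('b \<Rightarrow> 'a) \<Rightarrow> bool" where
  "cond \<beta> m m' \<longleftrightarrow> bal \<beta> \<and> clin scB scA m \<and> (\<forall>x y. m (y * x) = t x (m y))
      \<and> clin scB scA m' \<and> (\<forall>x y. m' (x * y) = s x (m' y))"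

lemma theta_kill:
  assumes c: "cond \<beta> m m'"
  shows "\<forall>r\<in>Rel. fev (\<lambda>p. \<beta> (m' (snd p)) (m (fst p))) r = 0"
proof -
  have b: "bil \<beta>" and bt: "\<forall>x a b. \<beta> (s x a) b = \<beta> a (t x b)"
    and m: "clin scB scA m" "\<forall>x y. m (y * x) = t x (m y)"
    and m': "clin scB scA m'" "\<forall>x y. m' (x * y) = s x (m' y)"
    using c unfolding cond_def bal_def by auto
  have as: "\<beta> (m' z) (m (x * y)) = \<beta> (m' (y * z)) (m x)" for x y z
  proof -
    have "\<beta> (m' z) (m (x * y)) = \<beta> (m' z) (t y (m x))" using m(2) by simp
    also have "\<dots> = \<beta> (s y (m' z)) (m x)" using bt by simp
    also have "\<dots> = \<beta> (m' (y * z)) (m x)" using m'(2) by simp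
    finally show ?thesis .
  qed
  show ?thesis
    unfolding Rel_def bil_rel_def
    using b m(1) m'(1) as
    by (auto simp: fev_d3 fev_d2c fev_d2 bil_def clin_def)
qed

definition th :: "('a \<Rightarrow> 'a \<Rightarrow> complex) \<Rightarrow> ('b \<Rightarrow> 'a) \<Rightarrow> ('b \<Rightarrow> 'a) \<Rightarrow> 'b \<Rightarrow> complex" where
  "th \<beta> m m' y = fev (\<lambda>p. \<beta> (m' (snd p)) (m (fst p))) (spl y)"

lemma th_eq:
  assumes fm: "firm scB" and c: "cond \<beta> m m'" and f: "fsupp f"
    and y: "fsum scB f (\<lambda>p. fst p * snd p) = y"
  shows "fev (\<lambda>p. \<beta> (m' (snd p)) (m (fst p))) f = th \<beta> m m' y"
  unfolding th_def using firm_inv[OF fm f spl(1)[OF fm] _ theta_kill[OF c]] spl(2)[OF fm] y by simp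

lemma th_lin:
  assumes fm: "firm scB" and c: "cond \<beta> m m'" and fin: "finite Ks"
  shows "th \<beta> m m' (\<Sum>k\<in>Ks. scB (\<mu> k) (y k)) = (\<Sum>k\<in>Ks. \<mu> k * th \<beta> m m' (y k))"
proof -
  define f where "f = (\<lambda>q. \<Sum>k\<in>Ks. \<mu> k * spl (y k) q)"
  have sp: "\<forall>k\<in>Ks. fsupp (spl (y k))" using spl(1)[OF fm] by blast
  have fs: "fsupp f" unfolding f_def by (rule fsupp_lincomb[OF fin sp])
  have "fsum scB f (\<lambda>p. fst p * snd p) = (\<Sum>k\<in>Ks. scB (\<mu> k) (fsum scB (spl (y k)) (\<lambda>p. fst p * snd p)))"
    unfolding f_def by (rule fsum_lincomb[OF fin sp]) (auto simp: scB_addl scB_add scB_sc)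
  also have "\<dots> = (\<Sum>k\<in>Ks. scB (\<mu> k) (y k))" using spl(2)[OF fm] by simp
  finally have "th \<beta> m m' (\<Sum>k\<in>Ks. scB (\<mu> k) (y k)) = fev (\<lambda>p. \<beta> (m' (snd p)) (m (fst p))) f"
    using th_eq[OF fm c fs] by simp
  also have "\<dots> = (\<Sum>k\<in>Ks. \<mu> k * fev (\<lambda>p. \<beta> (m' (snd p)) (m (fst p))) (spl (y k)))"
    unfolding f_def by (rule fev_lincomb[OF fin sp])
  finally show ?thesis unfolding th_def .
qed

lemma th_0: assumes "firm scB" "cond \<beta> m m'" shows "th \<beta> m m' 0 = 0"
  using th_lin[OF assms, where Ks="{}"] by simp

lemma th_left:
  assumes fm: "firm scB" and c: "cond \<beta> m m'"
  shows "th \<beta> m m' (y * x) = \<beta> (m' x) (m y)"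
proof -
  have b: "bil \<beta>" and bt: "\<forall>x a b. \<beta> (s x a) b = \<beta> a (t x b)"
    and m: "clin scB scA m" "\<forall>x y. m (y * x) = t x (m y)"
    and m': "clin scB scA m'" "\<forall>x y. m' (x * y) = s x (m' y)"
    using c unfolding cond_def bal_def by auto
  define f where "f = spl x"
  have f: "fsupp f" "fsum scB f (\<lambda>p. fst p * snd p) = x" using spl[OF fm] f_def by auto
  let ?S = "{p. f p \<noteq> 0}"
  define g where "g = fmap (\<lambda>q. (y * fst q, snd q)) f"
  have g: "fsupp g" unfolding g_def by (rule fsupp_fmap[OF f(1)])
  have "fsum scB g (\<lambda>p. fst p * snd p) = (\<Sum>q\<in>?S. scB (f q) (y * fst q * snd q))"
    unfolding g_def by (subst fsum_fmap[OF _ _ f(1)]) (auto simp: scB_addl)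
  also have "\<dots> = y * (\<Sum>q\<in>?S. scB (f q) (fst q * snd q))"
    by (simp add: sum_distrib_left scB_mult(2) mult.assoc)
  also have "\<dots> = y * x" using f(2) unfolding fsum_def by simp
  finally have "th \<beta> m m' (y * x) = fev (\<lambda>p. \<beta> (m' (snd p)) (m (fst p))) g"
    using th_eq[OF fm c g] by simp
  also have "\<dots> = (\<Sum>q\<in>?S. f q * \<beta> (m' (snd q)) (m (y * fst q)))"
    unfolding g_def by (simp add: fev_fmap[OF f(1)])
  also have "\<dots> = (\<Sum>q\<in>?S. f q * \<beta> (m' (fst q * snd q)) (m y))"
  proof (rule sum.cong[OF refl])
    fix q
    have "\<beta> (m' (snd q)) (m (y * fst q)) = \<beta> (m' (snd q)) (t (fst q) (m y))" using m(2) by simp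
    also have "\<dots> = \<beta> (s (fst q) (m' (snd q))) (m y)" using bt by simp
    also have "\<dots> = \<beta> (m' (fst q * snd q)) (m y)" using m'(2) by simp
    finally show "f q * \<beta> (m' (snd q)) (m (y * fst q)) = f q * \<beta> (m' (fst q * snd q)) (m y)" by simp
  qed
  also have "\<dots> = \<beta> (\<Sum>q\<in>?S. scA (f q) (m' (fst q * snd q))) (m y)"
    by (simp add: bil_sum1[OF b])
  also have "\<dots> = \<beta> (m' x) (m y)"
  proof -
    have "m' x = (\<Sum>q\<in>?S. scA (f q) (m' (fst q * snd q)))"
      using f(2) clinBA_sum[OF m'(1), where \<mu>=f and x="\<lambda>q. fst q * snd q" and I="?S"]
      unfolding fsum_def by simp
    then show ?thesis by simp
  qed
  finally show ?thesis .
qed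

lemma th_right:
  assumes fm: "firm scB" and c: "cond \<beta> m m'"
  shows "th \<beta> m m' (x * y) = \<beta> (m' y) (m x)"
proof -
  have b: "bil \<beta>" and bt: "\<forall>x a b. \<beta> (s x a) b = \<beta> a (t x b)"
    and m: "clin scB scA m" "\<forall>x y. m (y * x) = t x (m y)"
    and m': "clin scB scA m'" "\<forall>x y. m' (x * y) = s x (m' y)"
    using c unfolding cond_def bal_def by auto
  define f where "f = spl x"
  have f: "fsupp f" "fsum scB f (\<lambda>p. fst p * snd p) = x" using spl[OF fm] f_def by auto
  let ?S = "{p. f p \<noteq> 0}"
  define g where "g = fmap (\<lambda>q. (fst q, snd q * y)) f"
  have g: "fsupp g" unfolding g_def by (rule fsupp_fmap[OF f(1)])
  have "fsum scB g (\<lambda>p. fst p * snd p) = (\<Sum>q\<in>?S. scB (f q) (fst q * (snd q * y)))"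
    unfolding g_def by (subst fsum_fmap[OF _ _ f(1)]) (auto simp: scB_addl)
  also have "\<dots> = (\<Sum>q\<in>?S. scB (f q) (fst q * snd q)) * y"
    by (simp add: sum_distrib_right scB_mult(1)[symmetric] mult.assoc)
  also have "\<dots> = x * y" using f(2) unfolding fsum_def by simp
  finally have "th \<beta> m m' (x * y) = fev (\<lambda>p. \<beta> (m' (snd p)) (m (fst p))) g"
    using th_eq[OF fm c g] by simp
  also have "\<dots> = (\<Sum>q\<in>?S. f q * \<beta> (m' (snd q * y)) (m (fst q)))"
    unfolding g_def by (simp add: fev_fmap[OF f(1)])
  also have "\<dots> = (\<Sum>q\<in>?S. f q * \<beta> (m' y) (m (fst q * snd q)))"
  proof (rule sum.cong[OF refl])
    fix q
    have "\<beta> (m' (snd q * y)) (m (fst q)) = \<beta> (s (snd q) (m' y)) (m (fst q))" using m'(2) by simp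
    also have "\<dots> = \<beta> (m' y) (t (snd q) (m (fst q)))" using bt by simp
    also have "\<dots> = \<beta> (m' y) (m (fst q * snd q))" using m(2) by simp
    finally show "f q * \<beta> (m' (snd q * y)) (m (fst q)) = f q * \<beta> (m' y) (m (fst q * snd q))" by simp
  qed
  also have "\<dots> = \<beta> (m' y) (\<Sum>q\<in>?S. scA (f q) (m (fst q * snd q)))"
    by (simp add: bil_sum2[OF b])
  also have "\<dots> = \<beta> (m' y) (m x)"
  proof -
    have "m x = (\<Sum>q\<in>?S. scA (f q) (m (fst q * snd q)))"
      using f(2) clinBA_sum[OF m(1), where \<mu>=f and x="\<lambda>q. fst q * snd q" and I="?S"]
      unfolding fsum_def by simp
    then show ?thesis by simp
  qed
  finally show ?thesis .
qed

end


context setting begin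

lemma case3_1:
  assumes fm: "firm scB" and lpl: "loc_proj_left scA scB s" and lpr: "loc_proj_right scA scB t"
    and fin: "finite I"
    and H: "\<forall>\<beta> c. bal \<beta> \<longrightarrow> (\<Sum>i\<in>I. wt i * \<beta> (a i * c) (b i)) = 0" and bt: "bal \<beta>"
  shows "(\<Sum>i\<in>I. wt i * \<beta> (a i) (b i)) = 0"
proof -
  have fb: "finite (b ` I)" and fa: "finite (a ` I)" using fin by auto
  obtain n :: nat and u m where um: "\<forall>i<n. clin scA scB (u i) \<and> (\<forall>x a. u i (t x a) = u i a * x) \<and>
        clin scB scA (m i) \<and> (\<forall>x y. m i (y * x) = t x (m i y))"
     and rb: "\<forall>x\<in>b ` I. (\<Sum>i<n. m i (u i x)) = x"
    using lpr[unfolded loc_proj_right_def, rule_format, OF fb] by blast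
  obtain n' :: nat and u' m' where um': "\<forall>j<n'. clin scA scB (u' j) \<and> (\<forall>x a. u' j (s x a) = x * u' j a) \<and>
        clin scB scA (m' j) \<and> (\<forall>x y. m' j (x * y) = s x (m' j y))"
     and ra: "\<forall>x\<in>a ` I. (\<Sum>j<n'. m' j (u' j x)) = x"
    using lpl[unfolded loc_proj_left_def, rule_format, OF fa] by blast
  have cnd: "cond \<beta> (m i) (m' j)" if "i < n" "j < n'" for i j
    using um um' bt that unfolding cond_def by blast
  have b: "bil \<beta>" using bt bal_def by auto
  have KF: "\<beta> x (m i y) = (\<Sum>j<n'. th \<beta> (m i) (m' j) (u' j (s y x)))"
    if x: "x \<in> a ` I" and i: "i < n" for x y i
  proof -
    have "(\<Sum>j<n'. th \<beta> (m i) (m' j) (u' j (s y x))) = (\<Sum>j<n'. \<beta> (m' j (u' j x)) (m i y))"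
    proof (rule sum.cong[OF refl])
      fix j assume "j \<in> {..<n'}"
      then have j: "j < n'" by simp
      have "u' j (s y x) = y * u' j x" using um' j by blast
      then show "th \<beta> (m i) (m' j) (u' j (s y x)) = \<beta> (m' j (u' j x)) (m i y)"
        using th_left[OF fm cnd[OF i j]] by simp
    qed
    also have "\<dots> = \<beta> (\<Sum>j<n'. m' j (u' j x)) (m i y)" by (simp add: bil_sum1p[OF b])
    also have "\<dots> = \<beta> x (m i y)"
    proof -
      have "(\<Sum>j<n'. m' j (u' j x)) = x" using ra x by blast
      then show ?thesis by simp
    qed
    finally show ?thesis by simp
  qed
  define \<alpha> where "\<alpha> i = (\<Sum>p\<in>I. scA (wt p) (s (u i (b p)) (a p)))" for i
  have \<alpha>0: "\<alpha> i = 0" if i: "i < n" for i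
  proof -
    have ui: "clin scA scB (u i)" "\<forall>x a. u i (t x a) = u i a * x" using um i by auto
    have "\<alpha> i * c = 0" for c
    proof (rule sepA, intro allI impI)
      fix f assume f: "lin f"
      define \<beta>f where "\<beta>f x y = f (s (u i y) x)" for x y
      have "bal \<beta>f"
        unfolding bal_def bil_def \<beta>f_def
        using ui(1) ui(2) by (auto simp: clin_def lin_add[OF f] lin_sc[OF f] s_adda s_sca s_addB s_scB s_comp)
      have "\<alpha> i * c = (\<Sum>p\<in>I. scA (wt p) (s (u i (b p)) (a p * c)))"
        unfolding \<alpha>_def sum_distrib_right by (simp add: scA_mult(1) s_mult)
      then have "f (\<alpha> i * c) = (\<Sum>p\<in>I. wt p * \<beta>f (a p * c) (b p))"
        unfolding \<beta>f_def using lin_sum[OF f] by simp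
      also have "\<dots> = 0" using H \<open>bal \<beta>f\<close> by blast
      finally show "f (\<alpha> i * c) = 0" .
    qed
    then show ?thesis using A_nondeg by blast
  qed
  have "(\<Sum>p\<in>I. wt p * \<beta> (a p) (b p)) = (\<Sum>p\<in>I. wt p * \<beta> (a p) (\<Sum>i<n. m i (u i (b p))))"
    using rb by (intro sum.cong) auto
  also have "\<dots> = (\<Sum>p\<in>I. \<Sum>i<n. wt p * \<beta> (a p) (m i (u i (b p))))"
    by (simp add: bil_sum2p[OF b] sum_distrib_left)
  also have "\<dots> = (\<Sum>p\<in>I. \<Sum>i<n. \<Sum>j<n'. wt p * th \<beta> (m i) (m' j) (u' j (s (u i (b p)) (a p))))"
  proof (rule sum.cong[OF refl], rule sum.cong[OF refl])
    fix p i assume "p \<in> I" "i \<in> {..<n}"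
    then show "wt p * \<beta> (a p) (m i (u i (b p))) =
       (\<Sum>j<n'. wt p * th \<beta> (m i) (m' j) (u' j (s (u i (b p)) (a p))))"
      using KF[of "a p" i "u i (b p)"] by (simp add: sum_distrib_left)
  qed
  also have "\<dots> = (\<Sum>i<n. \<Sum>p\<in>I. \<Sum>j<n'. wt p * th \<beta> (m i) (m' j) (u' j (s (u i (b p)) (a p))))"
    by (rule sum.swap)
  also have "\<dots> = (\<Sum>i<n. \<Sum>j<n'. \<Sum>p\<in>I. wt p * th \<beta> (m i) (m' j) (u' j (s (u i (b p)) (a p))))"
    by (rule sum.cong[OF refl], rule sum.swap)
  also have "\<dots> = (\<Sum>i<n. \<Sum>j<n'. th \<beta> (m i) (m' j) (u' j (\<alpha> i)))"
  proof (rule sum.cong[OF refl], rule sum.cong[OF refl])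
    fix i j assume i: "i \<in> {..<n}" and j: "j \<in> {..<n'}"
    have cu: "clin scA scB (u' j)" using um' j by auto
    have "u' j (\<alpha> i) = (\<Sum>p\<in>I. scB (wt p) (u' j (s (u i (b p)) (a p))))"
      unfolding \<alpha>_def by (rule clinAB_sum[OF cu])
    then show "(\<Sum>p\<in>I. wt p * th \<beta> (m i) (m' j) (u' j (s (u i (b p)) (a p)))) =
        th \<beta> (m i) (m' j) (u' j (\<alpha> i))"
      using th_lin[OF fm cnd fin] i j by simp
  qed
  also have "\<dots> = 0"
  proof (rule sum.neutral, rule ballI, rule sum.neutral, rule ballI)
    fix i j assume i: "i \<in> {..<n}" and j: "j \<in> {..<n'}"
    have cu: "clin scA scB (u' j)" using um' j by auto
    show "th \<beta> (m i) (m' j) (u' j (\<alpha> i)) = 0"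
      using \<alpha>0 i clin_0[OF cu] th_0[OF fm cnd] j by simp
  qed
  finally show ?thesis .
qed

lemma case3_2:
  assumes fm: "firm scB" and lpl: "loc_proj_left scA scB s" and lpr: "loc_proj_right scA scB t"
    and fin: "finite I"
    and H: "\<forall>\<beta> c. bal \<beta> \<longrightarrow> (\<Sum>i\<in>I. wt i * \<beta> (a i) (b i * c)) = 0" and bt: "bal \<beta>"
  shows "(\<Sum>i\<in>I. wt i * \<beta> (a i) (b i)) = 0"
proof -
  have fb: "finite (b ` I)" and fa: "finite (a ` I)" using fin by auto
  obtain n :: nat and u m where um: "\<forall>i<n. clin scA scB (u i) \<and> (\<forall>x a. u i (t x a) = u i a * x) \<and>
        clin scB scA (m i) \<and> (\<forall>x y. m i (y * x) = t x (m i y))"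
     and rb: "\<forall>x\<in>b ` I. (\<Sum>i<n. m i (u i x)) = x"
    using lpr[unfolded loc_proj_right_def, rule_format, OF fb] by blast
  obtain n' :: nat and u' m' where um': "\<forall>j<n'. clin scA scB (u' j) \<and> (\<forall>x a. u' j (s x a) = x * u' j a) \<and>
        clin scB scA (m' j) \<and> (\<forall>x y. m' j (x * y) = s x (m' j y))"
     and ra: "\<forall>x\<in>a ` I. (\<Sum>j<n'. m' j (u' j x)) = x"
    using lpl[unfolded loc_proj_left_def, rule_format, OF fa] by blast
  have cnd: "cond \<beta> (m i) (m' j)" if "i < n" "j < n'" for i j
    using um um' bt that unfolding cond_def by blast
  have b: "bil \<beta>" using bt bal_def by auto
  have KF: "\<beta> (m' j y) x = (\<Sum>i<n. th \<beta> (m i) (m' j) (u i (t y x)))"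
    if x: "x \<in> b ` I" and j: "j < n'" for x y j
  proof -
    have "(\<Sum>i<n. th \<beta> (m i) (m' j) (u i (t y x))) = (\<Sum>i<n. \<beta> (m' j y) (m i (u i x)))"
    proof (rule sum.cong[OF refl])
      fix i assume "i \<in> {..<n}"
      then have i: "i < n" by simp
      have "u i (t y x) = u i x * y" using um i by blast
      then show "th \<beta> (m i) (m' j) (u i (t y x)) = \<beta> (m' j y) (m i (u i x))"
        using th_right[OF fm cnd[OF i j]] by simp
    qed
    also have "\<dots> = \<beta> (m' j y) (\<Sum>i<n. m i (u i x))" by (simp add: bil_sum2p[OF b])
    also have "\<dots> = \<beta> (m' j y) x"
    proof -
      have "(\<Sum>i<n. m i (u i x)) = x" using rb x by blast
      then show ?thesis by simp
    qed
    finally show ?thesis by simp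
  qed
  define \<alpha> where "\<alpha> j = (\<Sum>p\<in>I. scA (wt p) (t (u' j (a p)) (b p)))" for j
  have \<alpha>0: "\<alpha> j = 0" if j: "j < n'" for j
  proof -
    have uj: "clin scA scB (u' j)" "\<forall>x a. u' j (s x a) = x * u' j a" using um' j by auto
    have "\<alpha> j * c = 0" for c
    proof (rule sepA, intro allI impI)
      fix f assume f: "lin f"
      define \<beta>f where "\<beta>f x y = f (t (u' j x) y)" for x y
      have "bal \<beta>f"
        unfolding bal_def bil_def \<beta>f_def
        using uj(1) uj(2) by (auto simp: clin_def lin_add[OF f] lin_sc[OF f] t_adda t_sca t_addB t_scB t_comp)
      have "\<alpha> j * c = (\<Sum>p\<in>I. scA (wt p) (t (u' j (a p)) (b p * c)))"
        unfolding \<alpha>_def sum_distrib_right by (simp add: scA_mult(1) t_mult)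
      then have "f (\<alpha> j * c) = (\<Sum>p\<in>I. wt p * \<beta>f (a p) (b p * c))"
        unfolding \<beta>f_def using lin_sum[OF f] by simp
      also have "\<dots> = 0" using H \<open>bal \<beta>f\<close> by blast
      finally show "f (\<alpha> j * c) = 0" .
    qed
    then show ?thesis using A_nondeg by blast
  qed
  have "(\<Sum>p\<in>I. wt p * \<beta> (a p) (b p)) = (\<Sum>p\<in>I. wt p * \<beta> (\<Sum>j<n'. m' j (u' j (a p))) (b p))"
    using ra by (intro sum.cong) auto
  also have "\<dots> = (\<Sum>p\<in>I. \<Sum>j<n'. wt p * \<beta> (m' j (u' j (a p))) (b p))"
    by (simp add: bil_sum1p[OF b] sum_distrib_left)
  also have "\<dots> = (\<Sum>p\<in>I. \<Sum>j<n'. \<Sum>i<n. wt p * th \<beta> (m i) (m' j) (u i (t (u' j (a p)) (b p))))"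
  proof (rule sum.cong[OF refl], rule sum.cong[OF refl])
    fix p j assume "p \<in> I" "j \<in> {..<n'}"
    then show "wt p * \<beta> (m' j (u' j (a p))) (b p) =
       (\<Sum>i<n. wt p * th \<beta> (m i) (m' j) (u i (t (u' j (a p)) (b p))))"
      using KF[of "b p" j "u' j (a p)"] by (simp add: sum_distrib_left)
  qed
  also have "\<dots> = (\<Sum>j<n'. \<Sum>p\<in>I. \<Sum>i<n. wt p * th \<beta> (m i) (m' j) (u i (t (u' j (a p)) (b p))))"
    by (rule sum.swap)
  also have "\<dots> = (\<Sum>j<n'. \<Sum>i<n. \<Sum>p\<in>I. wt p * th \<beta> (m i) (m' j) (u i (t (u' j (a p)) (b p))))"
    by (rule sum.cong[OF refl], rule sum.swap)
  also have "\<dots> = (\<Sum>j<n'. \<Sum>i<n. th \<beta> (m i) (m' j) (u i (\<alpha> j)))"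
  proof (rule sum.cong[OF refl], rule sum.cong[OF refl])
    fix j i assume j: "j \<in> {..<n'}" and i: "i \<in> {..<n}"
    have cu: "clin scA scB (u i)" using um i by auto
    have "u i (\<alpha> j) = (\<Sum>p\<in>I. scB (wt p) (u i (t (u' j (a p)) (b p))))"
      unfolding \<alpha>_def by (rule clinAB_sum[OF cu])
    then show "(\<Sum>p\<in>I. wt p * th \<beta> (m i) (m' j) (u i (t (u' j (a p)) (b p)))) =
        th \<beta> (m i) (m' j) (u i (\<alpha> j))"
      using th_lin[OF fm cnd fin] i j by simp
  qed
  also have "\<dots> = 0"
  proof (rule sum.neutral, rule ballI, rule sum.neutral, rule ballI)
    fix j i assume j: "j \<in> {..<n'}" and i: "i \<in> {..<n}"
    have cu: "clin scA scB (u i)" using um i by auto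
    show "th \<beta> (m i) (m' j) (u i (\<alpha> j)) = 0"
      using \<alpha>0 j clin_0[OF cu] th_0[OF fm cnd] i by simp
  qed
  finally show ?thesis .
qed

end


lemma bop_mul_delta1: "bop_mul D (delta q) q' = fmap (\<lambda>p. (fst p * fst q, snd q * snd p)) D q'"
  unfolding bop_mul_def fmap_def supp_delta
proof (rule sum.cong[OF refl])
  fix p
  show "(\<Sum>p'\<in>{q}. if (fst p * fst p', snd p' * snd p) = q' then D p * delta q p' else 0) =
    (if (fst p * fst q, snd q * snd p) = q' then D p else 0)"
    by (simp add: delta_def)
qed

lemma bop_mul_delta: "bop_mul D (delta q) = fmap (\<lambda>p. (fst p * fst q, snd q * snd p)) D"
  using bop_mul_delta1 by blast

context setting begin

definition Gam :: "('a \<Rightarrow> 'a \<Rightarrow> complex) \<Rightarrow> ('b \<times> 'b \<Rightarrow> complex) \<Rightarrow> 'a \<Rightarrow> 'a \<Rightarrow> complex" where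
  "Gam \<gamma> D a b = fev (\<lambda>p. \<gamma> (s (fst p) a) (t (snd p) b)) D"

lemma Gam_teq:
  assumes g: "bil \<gamma>" and D: "fsupp D" and D': "fsupp D'" and eq: "teq scB D D'"
  shows "Gam \<gamma> D a b = Gam \<gamma> D' a b"
proof -
  have kill: "\<forall>r\<in>bil_rel scB scB. fsupp r \<and> fev (\<lambda>p. \<gamma> (s (fst p) a) (t (snd p) b)) r = 0"
    using g unfolding bil_rel_def bil_def
    by (auto simp: fsupp_d3 fsupp_d2c fsupp_d2 fev_d3 fev_d2c fev_d2 s_addB s_scB t_addB t_scB)
  have "(\<lambda>q. D q - D' q) \<in> fspan (bil_rel scB scB)" using eq unfolding teq_def .
  then have "fev (\<lambda>p. \<gamma> (s (fst p) a) (t (snd p) b)) (\<lambda>q. D q - D' q) = 0"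
    by (rule fev_fspan[OF kill])
  then show ?thesis unfolding Gam_def using fev_diff[OF D D'] by simp
qed

lemma fsupp_bop_delta: "fsupp D \<Longrightarrow> fsupp (bop_mul D (delta q))"
  unfolding bop_mul_delta by (rule fsupp_fmap)

lemma Gam_bop_delta:
  assumes D: "fsupp D"
  shows "Gam \<gamma> (bop_mul D (delta (x1, x2))) a b = Gam \<gamma> D (s x1 a) (t x2 b)"
proof -
  have "Gam \<gamma> (bop_mul D (delta (x1, x2))) a b =
     (\<Sum>p\<in>{p. D p \<noteq> 0}. D p * \<gamma> (s (fst p * x1) a) (t (x2 * snd p) b))"
    unfolding Gam_def bop_mul_delta by (simp add: fev_fmap[OF D])
  also have "\<dots> = (\<Sum>p\<in>{p. D p \<noteq> 0}. D p * \<gamma> (s (fst p) (s x1 a)) (t (snd p) (t x2 b)))"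
    by (simp add: s_comp t_comp)
  also have "\<dots> = Gam \<gamma> D (s x1 a) (t x2 b)" unfolding Gam_def fev_def by simp
  finally show ?thesis .
qed

lemma Gam_bil:
  assumes g: "bil \<gamma>"
  shows "bil (Gam \<gamma> D)"
  using g unfolding bil_def Gam_def fev_def
  by (simp add: s_adda s_sca t_adda t_sca distrib_left sum.distrib sum_distrib_left mult.left_commute)

lemma bil_s: "bil \<beta> \<Longrightarrow> bil (\<lambda>a b. \<beta> (s x a) b)"
  unfolding bil_def by (simp add: s_adda s_sca)
lemma bil_t: "bil \<beta> \<Longrightarrow> bil (\<lambda>a b. \<beta> a (t x b))"
  unfolding bil_def by (simp add: t_adda t_sca)

lemma EXT:
  assumes P: "bil P" and Q: "bil Q"
    and H: "\<And>x1 x2 a b. P (s x1 a) (t x2 b) = Q (s x1 a) (t x2 b)"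
  shows "P a' b' = Q a' b'"
proof -
  obtain n :: nat and \<mu> X Y where a: "a' = (\<Sum>k<n. scA (\<mu> k) (s (X k) (Y k)))" by (rule sdec)
  obtain n2 :: nat and \<nu> X' Y' where b: "b' = (\<Sum>k<n2. scA (\<nu> k) (t (X' k) (Y' k)))" by (rule tdec)
  have Pk: "P (s (X k) (Y k)) b' = Q (s (X k) (Y k)) b'" for k
  proof -
    have "P (s (X k) (Y k)) b' = (\<Sum>l<n2. \<nu> l * P (s (X k) (Y k)) (t (X' l) (Y' l)))"
      unfolding b by (rule bil_sum2[OF P])
    also have "\<dots> = (\<Sum>l<n2. \<nu> l * Q (s (X k) (Y k)) (t (X' l) (Y' l)))"
      by (simp add: H)
    also have "\<dots> = Q (s (X k) (Y k)) b'"
      unfolding b by (rule bil_sum2[OF Q, symmetric])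
    finally show ?thesis .
  qed
  have "P a' b' = (\<Sum>k<n. \<mu> k * P (s (X k) (Y k)) b')"
    unfolding a by (rule bil_sum1[OF P])
  also have "\<dots> = (\<Sum>k<n. \<mu> k * Q (s (X k) (Y k)) b')" by (simp add: Pk)
  also have "\<dots> = Q a' b'"
    unfolding a by (rule bil_sum1[OF Q, symmetric])
  finally show ?thesis .
qed

context
  fixes E assumes lsm: "left_sep_mult scB E"
begin

lemma E_fsupp: "fsupp f \<Longrightarrow> fsupp (E f)"
  using lsm unfolding left_sep_mult_def in_M_BBop_def by blast

definition dd :: "'b \<Rightarrow> ('b \<times> 'b \<Rightarrow> complex)" where
  "dd x = (SOME d. fsupp d \<and>
        (\<forall>f. fsupp f \<longrightarrow>
            teq scB (E (fmap (\<lambda>p. (x * fst p, snd p)) f)) (bop_mul d f) \<and>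
            teq scB (E (fmap (\<lambda>p. (fst p, snd p * x)) f)) (bop_mul d f)) \<and>
        fsum scB d (\<lambda>p. snd p * fst p) = x)"

lemma dd: "fsupp (dd x)"
  "\<And>f. fsupp f \<Longrightarrow> teq scB (E (fmap (\<lambda>p. (x * fst p, snd p)) f)) (bop_mul (dd x) f)"
  "\<And>f. fsupp f \<Longrightarrow> teq scB (E (fmap (\<lambda>p. (fst p, snd p * x)) f)) (bop_mul (dd x) f)"
  "fsum scB (dd x) (\<lambda>p. snd p * fst p) = x"
proof -
  have "\<exists>d. fsupp d \<and>
        (\<forall>f. fsupp f \<longrightarrow>
            teq scB (E (fmap (\<lambda>p. (x * fst p, snd p)) f)) (bop_mul d f) \<and>
            teq scB (E (fmap (\<lambda>p. (fst p, snd p * x)) f)) (bop_mul d f)) \<and>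
        fsum scB d (\<lambda>p. snd p * fst p) = x"
    using lsm unfolding left_sep_mult_def by blast
  then have "fsupp (dd x) \<and>
        (\<forall>f. fsupp f \<longrightarrow>
            teq scB (E (fmap (\<lambda>p. (x * fst p, snd p)) f)) (bop_mul (dd x) f) \<and>
            teq scB (E (fmap (\<lambda>p. (fst p, snd p * x)) f)) (bop_mul (dd x) f)) \<and>
        fsum scB (dd x) (\<lambda>p. snd p * fst p) = x"
    unfolding dd_def by (rule someI_ex)
  then show "fsupp (dd x)"
    "\<And>f. fsupp f \<Longrightarrow> teq scB (E (fmap (\<lambda>p. (x * fst p, snd p)) f)) (bop_mul (dd x) f)"
    "\<And>f. fsupp f \<Longrightarrow> teq scB (E (fmap (\<lambda>p. (fst p, snd p * x)) f)) (bop_mul (dd x) f)"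
    "fsum scB (dd x) (\<lambda>p. snd p * fst p) = x" by auto
qed

lemma Gam_E1:
  assumes g: "bil \<gamma>"
  shows "Gam \<gamma> (dd x) (s x1 a) (t x2 b) = Gam \<gamma> (E (delta (x * x1, x2))) a b"
proof -
  have "Gam \<gamma> (dd x) (s x1 a) (t x2 b) = Gam \<gamma> (bop_mul (dd x) (delta (x1, x2))) a b"
    by (rule Gam_bop_delta[OF dd(1), symmetric])
  also have "\<dots> = Gam \<gamma> (E (fmap (\<lambda>p. (x * fst p, snd p)) (delta (x1, x2)))) a b"
    using Gam_teq[OF g E_fsupp[OF fsupp_fmap[OF fsupp_delta]] fsupp_bop_delta[OF dd(1)]
          dd(2)[OF fsupp_delta]] by simp
  also have "\<dots> = Gam \<gamma> (E (delta (x * x1, x2))) a b" by (simp add: fmap_delta)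
  finally show ?thesis .
qed

lemma Gam_E2:
  assumes g: "bil \<gamma>"
  shows "Gam \<gamma> (dd x) (s x1 a) (t x2 b) = Gam \<gamma> (E (delta (x1, x2 * x))) a b"
proof -
  have "Gam \<gamma> (dd x) (s x1 a) (t x2 b) = Gam \<gamma> (bop_mul (dd x) (delta (x1, x2))) a b"
    by (rule Gam_bop_delta[OF dd(1), symmetric])
  also have "\<dots> = Gam \<gamma> (E (fmap (\<lambda>p. (fst p, snd p * x)) (delta (x1, x2)))) a b"
    using Gam_teq[OF g E_fsupp[OF fsupp_fmap[OF fsupp_delta]] fsupp_bop_delta[OF dd(1)]
          dd(3)[OF fsupp_delta]] by simp
  also have "\<dots> = Gam \<gamma> (E (delta (x1, x2 * x))) a b" by (simp add: fmap_delta)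
  finally show ?thesis .
qed

lemma KI:
  assumes g: "bil \<gamma>"
  shows "Gam \<gamma> (dd x') (s x a) b = Gam \<gamma> (dd x) a (t x' b)"
proof (rule EXT[where P="\<lambda>a b. Gam \<gamma> (dd x') (s x a) b" and Q="\<lambda>a b. Gam \<gamma> (dd x) a (t x' b)"])
  show "bil (\<lambda>a b. Gam \<gamma> (dd x') (s x a) b)" by (rule bil_s[OF Gam_bil[OF g]])
  show "bil (\<lambda>a b. Gam \<gamma> (dd x) a (t x' b))" by (rule bil_t[OF Gam_bil[OF g]])
  fix x1 x2 a b
  have "Gam \<gamma> (dd x') (s x (s x1 a)) (t x2 b) = Gam \<gamma> (dd x') (s (x * x1) a) (t x2 b)"
    by (simp add: s_comp)
  also have "\<dots> = Gam \<gamma> (E (delta (x * x1, x2 * x'))) a b" by (rule Gam_E2[OF g])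
  also have "\<dots> = Gam \<gamma> (dd x) (s x1 a) (t (x2 * x') b)" by (rule Gam_E1[OF g, symmetric])
  also have "\<dots> = Gam \<gamma> (dd x) (s x1 a) (t x' (t x2 b))" by (simp add: t_comp)
  finally show "Gam \<gamma> (dd x') (s x (s x1 a)) (t x2 b) = Gam \<gamma> (dd x) (s x1 a) (t x' (t x2 b))" .
qed

lemma KI2:
  assumes g: "bil \<gamma>"
  shows "Gam \<gamma> (dd (z * x)) a b = Gam \<gamma> (dd z) (s x a) b"
proof (rule EXT[where P="\<lambda>a b. Gam \<gamma> (dd (z * x)) a b" and Q="\<lambda>a b. Gam \<gamma> (dd z) (s x a) b"])
  show "bil (\<lambda>a b. Gam \<gamma> (dd (z * x)) a b)" using Gam_bil[OF g] by simp
  show "bil (\<lambda>a b. Gam \<gamma> (dd z) (s x a) b)" by (rule bil_s[OF Gam_bil[OF g]])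
  fix x1 x2 a b
  have "Gam \<gamma> (dd (z * x)) (s x1 a) (t x2 b) = Gam \<gamma> (E (delta (z * x * x1, x2))) a b"
    by (rule Gam_E1[OF g])
  also have "\<dots> = Gam \<gamma> (dd z) (s (x * x1) a) (t x2 b)"
    using Gam_E1[OF g, of z "x * x1" a x2 b] by (simp add: mult.assoc)
  also have "\<dots> = Gam \<gamma> (dd z) (s x (s x1 a)) (t x2 b)" by (simp add: s_comp)
  finally show "Gam \<gamma> (dd (z * x)) (s x1 a) (t x2 b) = Gam \<gamma> (dd z) (s x (s x1 a)) (t x2 b)" .
qed

lemma IND:
  assumes g: "bil \<gamma>"
    and a: "a' = (\<Sum>k<n. scA (\<mu> k) (s (X k) (Y k)))"
    and b: "b = (\<Sum>l<n2. scA (\<nu> l) (t (X' l) (Y' l)))"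
  shows "(\<Sum>k<n. \<mu> k * Gam \<gamma> (dd (X k)) (Y k) b) = (\<Sum>l<n2. \<nu> l * Gam \<gamma> (dd (X' l)) a' (Y' l))"
proof -
  note GB = Gam_bil[OF g]
  have "(\<Sum>k<n. \<mu> k * Gam \<gamma> (dd (X k)) (Y k) b) =
        (\<Sum>k<n. \<Sum>l<n2. \<mu> k * (\<nu> l * Gam \<gamma> (dd (X k)) (Y k) (t (X' l) (Y' l))))"
    unfolding b by (simp add: bil_sum2[OF GB] sum_distrib_left)
  also have "\<dots> = (\<Sum>k<n. \<Sum>l<n2. \<mu> k * (\<nu> l * Gam \<gamma> (dd (X' l)) (s (X k) (Y k)) (Y' l)))"
    by (simp add: KI[OF g])
  also have "\<dots> = (\<Sum>l<n2. \<Sum>k<n. \<mu> k * (\<nu> l * Gam \<gamma> (dd (X' l)) (s (X k) (Y k)) (Y' l)))"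
    by (rule sum.swap)
  also have "\<dots> = (\<Sum>l<n2. \<nu> l * Gam \<gamma> (dd (X' l)) a' (Y' l))"
    unfolding a by (simp add: bil_sum1[OF GB] sum_distrib_left mult.left_commute)
  finally show ?thesis .
qed

end

definition sdc :: "'a \<Rightarrow> nat \<times> (nat \<Rightarrow> complex) \<times> (nat \<Rightarrow> 'b) \<times> (nat \<Rightarrow> 'a)" where
  "sdc a = (SOME q. a = (\<Sum>k<fst q. scA (fst (snd q) k) (s (fst (snd (snd q)) k) (snd (snd (snd q)) k))))"

definition "sN a = fst (sdc a)"
definition "sM a = fst (snd (sdc a))"
definition "sX a = fst (snd (snd (sdc a)))"
definition "sY a = snd (snd (snd (sdc a)))"

lemma sdc: "a = (\<Sum>k<sN a. scA (sM a k) (s (sX a k) (sY a k)))"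
proof -
  obtain n :: nat and \<mu> X Y where a: "a = (\<Sum>k<n. scA (\<mu> k) (s (X k) (Y k)))" by (rule sdec)
  have "\<exists>q::nat \<times> (nat \<Rightarrow> complex) \<times> (nat \<Rightarrow> 'b) \<times> (nat \<Rightarrow> 'a). a = (\<Sum>k<fst q. scA (fst (snd q) k) (s (fst (snd (snd q)) k) (snd (snd (snd q)) k)))"
    by (rule exI[of _ "(n, \<mu>, X, Y)"]) (simp add: a)
  then have "a = (\<Sum>k<fst (sdc a). scA (fst (snd (sdc a)) k) (s (fst (snd (snd (sdc a))) k) (snd (snd (snd (sdc a))) k)))"
    unfolding sdc_def by (rule someI_ex)
  then show ?thesis unfolding sN_def sM_def sX_def sY_def .
qed

definition tdc :: "'a \<Rightarrow> nat \<times> (nat \<Rightarrow> complex) \<times> (nat \<Rightarrow> 'b) \<times> (nat \<Rightarrow> 'a)" where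
  "tdc a = (SOME q. a = (\<Sum>k<fst q. scA (fst (snd q) k) (t (fst (snd (snd q)) k) (snd (snd (snd q)) k))))"

definition "tN a = fst (tdc a)"
definition "tM a = fst (snd (tdc a))"
definition "tX a = fst (snd (snd (tdc a)))"
definition "tY a = snd (snd (snd (tdc a)))"

lemma tdc: "a = (\<Sum>k<tN a. scA (tM a k) (t (tX a k) (tY a k)))"
proof -
  obtain n :: nat and \<mu> X Y where a: "a = (\<Sum>k<n. scA (\<mu> k) (t (X k) (Y k)))" by (rule tdec)
  have "\<exists>q::nat \<times> (nat \<Rightarrow> complex) \<times> (nat \<Rightarrow> 'b) \<times> (nat \<Rightarrow> 'a). a = (\<Sum>k<fst q. scA (fst (snd q) k) (t (fst (snd (snd q)) k) (snd (snd (snd q)) k)))"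
    by (rule exI[of _ "(n, \<mu>, X, Y)"]) (simp add: a)
  then have "a = (\<Sum>k<fst (tdc a). scA (fst (snd (tdc a)) k) (t (fst (snd (snd (tdc a))) k) (snd (snd (snd (tdc a))) k)))"
    unfolding tdc_def by (rule someI_ex)
  then show ?thesis unfolding tN_def tM_def tX_def tY_def .
qed

context
  fixes E assumes lsm: "left_sep_mult scB E"
begin

definition G :: "('a \<Rightarrow> 'a \<Rightarrow> complex) \<Rightarrow> 'a \<Rightarrow> 'a \<Rightarrow> complex" where
  "G \<gamma> a' b = (\<Sum>k<sN a'. sM a' k * Gam \<gamma> (dd E (sX a' k)) (sY a' k) b)"

lemma Gb:
  assumes g: "bil \<gamma>" and b: "b = (\<Sum>l<n2. scA (\<nu> l) (t (X' l) (Y' l)))"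
  shows "G \<gamma> a' b = (\<Sum>l<n2. \<nu> l * Gam \<gamma> (dd E (X' l)) a' (Y' l))"
  unfolding G_def by (rule IND[OF lsm g sdc b])

lemma Ga:
  assumes g: "bil \<gamma>" and a: "a' = (\<Sum>k<n. scA (\<mu> k) (s (X k) (Y k)))"
  shows "G \<gamma> a' b = (\<Sum>k<n. \<mu> k * Gam \<gamma> (dd E (X k)) (Y k) b)"
  using Gb[OF g tdc] IND[OF lsm g a tdc] by simp

lemma G_s: assumes g: "bil \<gamma>" shows "G \<gamma> (s x a) b = Gam \<gamma> (dd E x) a b"
proof -
  have "s x a = (\<Sum>k<(1::nat). scA ((\<lambda>_. 1) k) (s ((\<lambda>_. x) k) ((\<lambda>_. a) k)))"
    by (simp add: scA_1)
  from Ga[OF g this] show ?thesis by simp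
qed

lemma G_t: assumes g: "bil \<gamma>" shows "G \<gamma> a (t x b) = Gam \<gamma> (dd E x) a b"
proof -
  have "t x b = (\<Sum>k<(1::nat). scA ((\<lambda>_. 1) k) (t ((\<lambda>_. x) k) ((\<lambda>_. b) k)))"
    by (simp add: scA_1)
  from Gb[OF g this] show ?thesis by simp
qed

lemma G_bal:
  assumes g: "bil \<gamma>"
  shows "bal (G \<gamma>)"
proof -
  note GB = Gam_bil[OF g]
  have GBd: "\<And>D. (\<forall>a a' b. Gam \<gamma> D (a + a') b = Gam \<gamma> D a b + Gam \<gamma> D a' b) \<and>
      (\<forall>a b b'. Gam \<gamma> D a (b + b') = Gam \<gamma> D a b + Gam \<gamma> D a b') \<and>
      (\<forall>c a b. Gam \<gamma> D (scA c a) b = c * Gam \<gamma> D a b) \<and> (\<forall>c a b. Gam \<gamma> D a (scA c b) = c * Gam \<gamma> D a b)"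
    using GB unfolding bil_def by blast
  have add1: "G \<gamma> (a1 + a2) b = G \<gamma> a1 b + G \<gamma> a2 b" for a1 a2 b
    by (simp add: Gb[OF g tdc[of b]] GBd distrib_left sum.distrib)
  have sc1: "G \<gamma> (scA c a) b = c * G \<gamma> a b" for c a b
    by (simp add: Gb[OF g tdc[of b]] GBd sum_distrib_left mult.left_commute)
  have add2: "G \<gamma> a (b1 + b2) = G \<gamma> a b1 + G \<gamma> a b2" for a b1 b2
    by (simp add: Ga[OF g sdc[of a]] GBd distrib_left sum.distrib)
  have sc2: "G \<gamma> a (scA c b) = c * G \<gamma> a b" for c a b
    by (simp add: Ga[OF g sdc[of a]] GBd sum_distrib_left mult.left_commute)
  have balc: "G \<gamma> (s z a) b = G \<gamma> a (t z b)" for z a b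
  proof -
    have sz: "s z a = (\<Sum>k<sN a. scA (sM a k) (s (z * sX a k) (sY a k)))"
      by (subst sdc[of a]) (simp add: s_suma s_comp)
    have "G \<gamma> (s z a) b = (\<Sum>k<sN a. sM a k * Gam \<gamma> (dd E (z * sX a k)) (sY a k) b)"
      by (rule Ga[OF g sz])
    also have "\<dots> = (\<Sum>k<sN a. sM a k * Gam \<gamma> (dd E z) (s (sX a k) (sY a k)) b)"
      by (simp add: KI2[OF lsm g])
    also have "\<dots> = (\<Sum>k<sN a. sM a k * Gam \<gamma> (dd E (sX a k)) (sY a k) (t z b))"
      by (simp add: KI[OF lsm g])
    also have "\<dots> = G \<gamma> a (t z b)" by (rule Ga[OF g sdc, symmetric])
    finally show ?thesis .
  qed
  show ?thesis unfolding bal_def bil_def using add1 sc1 add2 sc2 balc by blast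
qed

end

end


lemma sum_Sigma3:
  assumes "finite I" "\<And>i. finite (K i)" "\<And>i k. finite (Q i k)"
  shows "(\<Sum>x\<in>Sigma I (\<lambda>i. Sigma (K i) (Q i)). f (fst x) (fst (snd x)) (snd (snd x))) =
         (\<Sum>i\<in>I. \<Sum>k\<in>K i. \<Sum>q\<in>Q i k. f i k q)"
proof -
  have "(\<Sum>i\<in>I. \<Sum>k\<in>K i. \<Sum>q\<in>Q i k. f i k q) = (\<Sum>i\<in>I. \<Sum>z\<in>Sigma (K i) (Q i). f i (fst z) (snd z))"
    by (rule sum.cong[OF refl]) (simp add: sum.Sigma assms split_beta)
  also have "\<dots> = (\<Sum>x\<in>Sigma I (\<lambda>i. Sigma (K i) (Q i)). f (fst x) (fst (snd x)) (snd (snd x)))"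
    by (simp add: sum.Sigma assms split_beta finite_SigmaI)
  finally show ?thesis by simp
qed

context setting begin

context
  fixes E assumes lsm: "left_sep_mult scB E"
begin

lemma dd_fin: "finite {q. dd E x q \<noteq> 0}"
  using dd(1)[OF lsm] unfolding fsupp_def .

lemma Gam_bal1:
  assumes bt: "bal \<beta>"
  shows "Gam \<beta> (dd E x) a b = \<beta> (s x a) b"
proof -
  have b: "bil \<beta>" and bb: "\<forall>x a b. \<beta> (s x a) b = \<beta> a (t x b)" using bt unfolding bal_def by auto
  let ?S = "{p. dd E x p \<noteq> 0}"
  have "Gam \<beta> (dd E x) a b = (\<Sum>p\<in>?S. dd E x p * \<beta> (s (fst p) a) (t (snd p) b))"
    unfolding Gam_def fev_def by simp
  also have "\<dots> = (\<Sum>p\<in>?S. dd E x p * \<beta> (s (snd p * fst p) a) b)"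
    using bb by (simp add: s_comp)
  also have "\<dots> = \<beta> (\<Sum>p\<in>?S. scA (dd E x p) (s (snd p * fst p) a)) b"
    by (simp add: bil_sum1[OF b])
  also have "\<dots> = \<beta> (s (\<Sum>p\<in>?S. scB (dd E x p) (snd p * fst p)) a) b"
    by (simp add: s_sumB)
  also have "\<dots> = \<beta> (s x a) b"
    using dd(4)[OF lsm, of x] unfolding fsum_def by simp
  finally show ?thesis .
qed

lemma Gam_bal2:
  assumes bt: "bal \<beta>"
  shows "Gam \<beta> (dd E x) a b = \<beta> a (t x b)"
proof -
  have b: "bil \<beta>" and bb: "\<forall>x a b. \<beta> (s x a) b = \<beta> a (t x b)" using bt unfolding bal_def by auto
  let ?S = "{p. dd E x p \<noteq> 0}"
  have "Gam \<beta> (dd E x) a b = (\<Sum>p\<in>?S. dd E x p * \<beta> (s (fst p) a) (t (snd p) b))"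
    unfolding Gam_def fev_def by simp
  also have "\<dots> = (\<Sum>p\<in>?S. dd E x p * \<beta> a (t (snd p * fst p) b))"
    using bb by (simp add: t_comp)
  also have "\<dots> = \<beta> a (\<Sum>p\<in>?S. scA (dd E x p) (t (snd p * fst p) b))"
    by (simp add: bil_sum2[OF b])
  also have "\<dots> = \<beta> a (t (\<Sum>p\<in>?S. scB (dd E x p) (snd p * fst p)) b)"
    by (simp add: t_sumB)
  also have "\<dots> = \<beta> a (t x b)"
    using dd(4)[OF lsm, of x] unfolding fsum_def by simp
  finally show ?thesis .
qed

lemma G_bil: "bil \<gamma> \<Longrightarrow> bil (G E \<gamma>)"
  using G_bal[OF lsm] unfolding bal_def by blast

lemma case2_1:
  assumes fin: "finite I"
    and H: "\<forall>\<beta> c. bal \<beta> \<longrightarrow> (\<Sum>i\<in>I. wt i * \<beta> (a i * c) (b i)) = 0" and bt: "bal \<beta>"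
  shows "(\<Sum>i\<in>I. wt i * \<beta> (a i) (b i)) = 0"
proof -
  define J where "J = Sigma I (\<lambda>i. Sigma {..<sN (a i)} (\<lambda>k. {q. dd E (sX (a i) k) q \<noteq> 0}))"
  define W where "W x = wt (fst x) * sM (a (fst x)) (fst (snd x)) * dd E (sX (a (fst x)) (fst (snd x))) (snd (snd x))" for x :: "_ \<times> nat \<times> 'b \<times> 'b"
  define A where "A x = s (fst (snd (snd x))) (sY (a (fst x)) (fst (snd x)))" for x :: "_ \<times> nat \<times> 'b \<times> 'b"
  define Bb where "Bb x = t (snd (snd (snd x))) (b (fst x))" for x :: "_ \<times> nat \<times> 'b \<times> 'b"
  have finJ: "finite J" unfolding J_def using fin dd_fin by (auto intro!: finite_SigmaI)
  have HJ: "(\<Sum>x\<in>J. W x * \<gamma> (A x * c) (Bb x)) = 0" if g: "bil \<gamma>" for \<gamma> c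
  proof -
    have "(\<Sum>x\<in>J. W x * \<gamma> (A x * c) (Bb x)) =
      (\<Sum>i\<in>I. \<Sum>k<sN (a i). \<Sum>q\<in>{q. dd E (sX (a i) k) q \<noteq> 0}.
         wt i * sM (a i) k * dd E (sX (a i) k) q * \<gamma> (s (fst q) (sY (a i) k) * c) (t (snd q) (b i)))"
      unfolding J_def W_def A_def Bb_def
      by (rule sum_Sigma3[where f="\<lambda>i k q. wt i * sM (a i) k * dd E (sX (a i) k) q * \<gamma> (s (fst q) (sY (a i) k) * c) (t (snd q) (b i))"])
         (auto simp: fin dd_fin)
    also have "\<dots> = (\<Sum>i\<in>I. wt i * (\<Sum>k<sN (a i). sM (a i) k * Gam \<gamma> (dd E (sX (a i) k)) (sY (a i) k * c) (b i)))"
      unfolding Gam_def fev_def by (simp add: s_mult sum_distrib_left mult.assoc)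
    also have "\<dots> = (\<Sum>i\<in>I. wt i * (\<Sum>k<sN (a i). sM (a i) k * G E \<gamma> (s (sX (a i) k) (sY (a i) k * c)) (b i)))"
      by (simp add: G_s[OF lsm g])
    also have "\<dots> = (\<Sum>i\<in>I. wt i * G E \<gamma> (\<Sum>k<sN (a i). scA (sM (a i) k) (s (sX (a i) k) (sY (a i) k * c))) (b i))"
      by (simp add: bil_sum1[OF G_bil[OF g]])
    also have "\<dots> = (\<Sum>i\<in>I. wt i * G E \<gamma> (a i * c) (b i))"
    proof (rule sum.cong[OF refl])
      fix i
      have "a i * c = (\<Sum>k<sN (a i). scA (sM (a i) k) (s (sX (a i) k) (sY (a i) k))) * c"
        using sdc[of "a i"] by simp
      also have "\<dots> = (\<Sum>k<sN (a i). scA (sM (a i) k) (s (sX (a i) k) (sY (a i) k * c)))"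
        by (simp add: sum_distrib_right scA_mult(1) s_mult)
      finally show "wt i * G E \<gamma> (\<Sum>k<sN (a i). scA (sM (a i) k) (s (sX (a i) k) (sY (a i) k * c))) (b i) =
          wt i * G E \<gamma> (a i * c) (b i)" by simp
    qed
    also have "\<dots> = 0" using H G_bal[OF lsm g] by blast
    finally show ?thesis .
  qed
  have bil\<beta>: "bil \<beta>" using bt bal_def by auto
  have "(\<Sum>x\<in>J. W x * \<beta> (A x) (Bb x)) = 0"
    by (rule ND1[OF finJ _ bil\<beta>]) (use HJ in blast)
  moreover have "(\<Sum>x\<in>J. W x * \<beta> (A x) (Bb x)) = (\<Sum>i\<in>I. wt i * \<beta> (a i) (b i))"
  proof -
    have "(\<Sum>x\<in>J. W x * \<beta> (A x) (Bb x)) =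
      (\<Sum>i\<in>I. \<Sum>k<sN (a i). \<Sum>q\<in>{q. dd E (sX (a i) k) q \<noteq> 0}.
         wt i * sM (a i) k * dd E (sX (a i) k) q * \<beta> (s (fst q) (sY (a i) k)) (t (snd q) (b i)))"
      unfolding J_def W_def A_def Bb_def
      by (rule sum_Sigma3[where f="\<lambda>i k q. wt i * sM (a i) k * dd E (sX (a i) k) q * \<beta> (s (fst q) (sY (a i) k)) (t (snd q) (b i))"])
         (auto simp: fin dd_fin)
    also have "\<dots> = (\<Sum>i\<in>I. wt i * (\<Sum>k<sN (a i). sM (a i) k * Gam \<beta> (dd E (sX (a i) k)) (sY (a i) k) (b i)))"
      unfolding Gam_def fev_def by (simp add: sum_distrib_left mult.assoc)
    also have "\<dots> = (\<Sum>i\<in>I. wt i * (\<Sum>k<sN (a i). sM (a i) k * \<beta> (s (sX (a i) k) (sY (a i) k)) (b i)))"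
      by (simp add: Gam_bal1[OF bt])
    also have "\<dots> = (\<Sum>i\<in>I. wt i * \<beta> (a i) (b i))"
    proof (rule sum.cong[OF refl])
      fix i
      have "\<beta> (a i) (b i) = \<beta> (\<Sum>k<sN (a i). scA (sM (a i) k) (s (sX (a i) k) (sY (a i) k))) (b i)"
        using sdc[of "a i"] by simp
      then show "wt i * (\<Sum>k<sN (a i). sM (a i) k * \<beta> (s (sX (a i) k) (sY (a i) k)) (b i)) = wt i * \<beta> (a i) (b i)"
        by (simp add: bil_sum1[OF bil\<beta>])
    qed
    finally show ?thesis .
  qed
  ultimately show ?thesis by simp
qed

lemma case2_2:
  assumes fin: "finite I"
    and H: "\<forall>\<beta> c. bal \<beta> \<longrightarrow> (\<Sum>i\<in>I. wt i * \<beta> (a i) (b i * c)) = 0" and bt: "bal \<beta>"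
  shows "(\<Sum>i\<in>I. wt i * \<beta> (a i) (b i)) = 0"
proof -
  define J where "J = Sigma I (\<lambda>i. Sigma {..<tN (b i)} (\<lambda>k. {q. dd E (tX (b i) k) q \<noteq> 0}))"
  define W where "W x = wt (fst x) * tM (b (fst x)) (fst (snd x)) * dd E (tX (b (fst x)) (fst (snd x))) (snd (snd x))" for x :: "_ \<times> nat \<times> 'b \<times> 'b"
  define A where "A x = s (fst (snd (snd x))) (a (fst x))" for x :: "_ \<times> nat \<times> 'b \<times> 'b"
  define Bb where "Bb x = t (snd (snd (snd x))) (tY (b (fst x)) (fst (snd x)))" for x :: "_ \<times> nat \<times> 'b \<times> 'b"
  have finJ: "finite J" unfolding J_def using fin dd_fin by (auto intro!: finite_SigmaI)
  have HJ: "(\<Sum>x\<in>J. W x * \<gamma> (A x) (Bb x * c)) = 0" if g: "bil \<gamma>" for \<gamma> c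
  proof -
    have "(\<Sum>x\<in>J. W x * \<gamma> (A x) (Bb x * c)) =
      (\<Sum>i\<in>I. \<Sum>k<tN (b i). \<Sum>q\<in>{q. dd E (tX (b i) k) q \<noteq> 0}.
         wt i * tM (b i) k * dd E (tX (b i) k) q * \<gamma> (s (fst q) (a i)) (t (snd q) (tY (b i) k) * c))"
      unfolding J_def W_def A_def Bb_def
      by (rule sum_Sigma3[where f="\<lambda>i k q. wt i * tM (b i) k * dd E (tX (b i) k) q * \<gamma> (s (fst q) (a i)) (t (snd q) (tY (b i) k) * c)"])
         (auto simp: fin dd_fin)
    also have "\<dots> = (\<Sum>i\<in>I. wt i * (\<Sum>k<tN (b i). tM (b i) k * Gam \<gamma> (dd E (tX (b i) k)) (a i) (tY (b i) k * c)))"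
      unfolding Gam_def fev_def by (simp add: t_mult sum_distrib_left mult.assoc)
    also have "\<dots> = (\<Sum>i\<in>I. wt i * (\<Sum>k<tN (b i). tM (b i) k * G E \<gamma> (a i) (t (tX (b i) k) (tY (b i) k * c))))"
      by (simp add: G_t[OF lsm g])
    also have "\<dots> = (\<Sum>i\<in>I. wt i * G E \<gamma> (a i) (\<Sum>k<tN (b i). scA (tM (b i) k) (t (tX (b i) k) (tY (b i) k * c))))"
      by (simp add: bil_sum2[OF G_bil[OF g]])
    also have "\<dots> = (\<Sum>i\<in>I. wt i * G E \<gamma> (a i) (b i * c))"
    proof (rule sum.cong[OF refl])
      fix i
      have "b i * c = (\<Sum>k<tN (b i). scA (tM (b i) k) (t (tX (b i) k) (tY (b i) k))) * c"
        using tdc[of "b i"] by simp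
      also have "\<dots> = (\<Sum>k<tN (b i). scA (tM (b i) k) (t (tX (b i) k) (tY (b i) k * c)))"
        by (simp add: sum_distrib_right scA_mult(1) t_mult)
      finally show "wt i * G E \<gamma> (a i) (\<Sum>k<tN (b i). scA (tM (b i) k) (t (tX (b i) k) (tY (b i) k * c))) =
          wt i * G E \<gamma> (a i) (b i * c)" by simp
    qed
    also have "\<dots> = 0" using H G_bal[OF lsm g] by blast
    finally show ?thesis .
  qed
  have bil\<beta>: "bil \<beta>" using bt bal_def by auto
  have "(\<Sum>x\<in>J. W x * \<beta> (A x) (Bb x)) = 0"
    by (rule ND2[OF finJ _ bil\<beta>]) (use HJ in blast)
  moreover have "(\<Sum>x\<in>J. W x * \<beta> (A x) (Bb x)) = (\<Sum>i\<in>I. wt i * \<beta> (a i) (b i))"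
  proof -
    have "(\<Sum>x\<in>J. W x * \<beta> (A x) (Bb x)) =
      (\<Sum>i\<in>I. \<Sum>k<tN (b i). \<Sum>q\<in>{q. dd E (tX (b i) k) q \<noteq> 0}.
         wt i * tM (b i) k * dd E (tX (b i) k) q * \<beta> (s (fst q) (a i)) (t (snd q) (tY (b i) k)))"
      unfolding J_def W_def A_def Bb_def
      by (rule sum_Sigma3[where f="\<lambda>i k q. wt i * tM (b i) k * dd E (tX (b i) k) q * \<beta> (s (fst q) (a i)) (t (snd q) (tY (b i) k))"])
         (auto simp: fin dd_fin)
    also have "\<dots> = (\<Sum>i\<in>I. wt i * (\<Sum>k<tN (b i). tM (b i) k * Gam \<beta> (dd E (tX (b i) k)) (a i) (tY (b i) k)))"
      unfolding Gam_def fev_def by (simp add: sum_distrib_left mult.assoc)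
    also have "\<dots> = (\<Sum>i\<in>I. wt i * (\<Sum>k<tN (b i). tM (b i) k * \<beta> (a i) (t (tX (b i) k) (tY (b i) k))))"
      by (simp add: Gam_bal2[OF bt])
    also have "\<dots> = (\<Sum>i\<in>I. wt i * \<beta> (a i) (b i))"
    proof (rule sum.cong[OF refl])
      fix i
      have "\<beta> (a i) (b i) = \<beta> (a i) (\<Sum>k<tN (b i). scA (tM (b i) k) (t (tX (b i) k) (tY (b i) k)))"
        using tdc[of "b i"] by simp
      then show "wt i * (\<Sum>k<tN (b i). tM (b i) k * \<beta> (a i) (t (tX (b i) k) (tY (b i) k))) = wt i * \<beta> (a i) (b i)"
        by (simp add: bil_sum2[OF bil\<beta>])
    qed
    finally show ?thesis .
  qed
  ultimately show ?thesis by simp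
qed

end
end


theorem lemma2p1:
  fixes scA :: "complex \<Rightarrow> 'a::ring \<Rightarrow> 'a"
    and scB :: "complex \<Rightarrow> 'b::ring \<Rightarrow> 'b"
    and s t :: "'b \<Rightarrow> 'a \<Rightarrow> 'a"
  assumes algA: "calg scA" and algB: "calg scB"
    and A_idem: "\<forall>a. a \<in> cspan scA {b * c | b c. True}"
    and A_nondeg: "\<forall>a::'a. (\<forall>b. a * b = 0) \<longrightarrow> a = 0"
    and s_M: "\<forall>x. in_MA scA (s x)"
    and s_hom: "\<forall>x y. s (x + y) = (\<lambda>a. s x a + s y a)"
               "\<forall>c x. s (scB c x) = (\<lambda>a. scA c (s x a))"
               "\<forall>x y. s (x * y) = s x \<circ> s y"
    and t_M: "\<forall>x. in_MA scA (t x)"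
    and t_antihom: "\<forall>x y. t (x + y) = (\<lambda>a. t x a + t y a)"
               "\<forall>c x. t (scB c x) = (\<lambda>a. scA c (t x a))"
               "\<forall>x y. t (x * y) = t y \<circ> t x"
    and commute: "\<forall>x y. s x \<circ> t y = t y \<circ> s x"
    and s_faithful: "inj s" and t_faithful: "inj t"
    and s_idem: "\<forall>a. a \<in> cspan scA {s x b | x b. True}"
    and t_idem: "\<forall>a. a \<in> cspan scA {t x b | x b. True}"
    and cases:
      "(\<forall>F::'a set. finite F \<longrightarrow> (\<exists>e. \<forall>a\<in>F. a * e = a))
       \<or> (\<exists>E. left_sep_mult scB E)
       \<or> (firm scB \<and> loc_proj_left scA scB s \<and> loc_proj_right scA scB t)"
  shows "(\<forall>w. fsupp w \<longrightarrow>
            (\<forall>c. fmap (\<lambda>p. (fst p * c, snd p)) w \<in> balA_ker scA s t) \<longrightarrow>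
            w \<in> balA_ker scA s t)
       \<and> (\<forall>w. fsupp w \<longrightarrow>
            (\<forall>c. fmap (\<lambda>p. (fst p, snd p * c)) w \<in> balA_ker scA s t) \<longrightarrow>
            w \<in> balA_ker scA s t)"
proof -
  interpret setting scA scB s t
    unfolding setting_def
    using algA algB A_nondeg s_M s_hom t_M t_antihom s_idem t_idem by blast
  have main1: "w \<in> balA_ker scA s t"
    if w: "fsupp w" and hc: "\<forall>c. fmap (\<lambda>p. (fst p * c, snd p)) w \<in> balA_ker scA s t" for w
  proof -
    let ?S = "{p. w p \<noteq> 0}"
    have fin: "finite ?S" using w unfolding fsupp_def .
    have H: "\<forall>\<beta> c. bal \<beta> \<longrightarrow> (\<Sum>p\<in>?S. w p * \<beta> (fst p * c) (snd p)) = 0"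
    proof (intro allI impI)
      fix \<beta> c assume b: "bal \<beta>"
      have "fev2 \<beta> (fmap (\<lambda>p. (fst p * c, snd p)) w) = 0" using bal_kills[OF b] hc by blast
      then show "(\<Sum>p\<in>?S. w p * \<beta> (fst p * c) (snd p)) = 0"
        using fev_fmap[OF w, where \<phi>="\<lambda>p. \<beta> (fst p) (snd p)" and g="\<lambda>p. (fst p * c, snd p)"] by simp
    qed
    have "\<forall>\<beta>. bal \<beta> \<longrightarrow> fev2 \<beta> w = 0"
    proof (intro allI impI)
      fix \<beta> assume b: "bal \<beta>"
      have "(\<Sum>p\<in>?S. w p * \<beta> (fst p) (snd p)) = 0"
      proof -
        consider (c1) "\<forall>F::'a set. finite F \<longrightarrow> (\<exists>e. \<forall>a\<in>F. a * e = a)"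
          | (c2) "\<exists>E. left_sep_mult scB E"
          | (c3) "firm scB \<and> loc_proj_left scA scB s \<and> loc_proj_right scA scB t"
          using assms(18) by blast
        then show ?thesis
        proof cases
          case c1 then show ?thesis using case1_1[OF c1 fin H b] by simp
        next
          case c2
          then obtain E where E: "left_sep_mult scB E" by blast
          show ?thesis using case2_1[OF E fin H b] by simp
        next
          case c3
          then show ?thesis using case3_1[OF _ _ _ fin H b] by blast
        qed
      qed
      then show "fev2 \<beta> w = 0" unfolding fev_def by simp
    qed
    then show ?thesis by (rule sep_K[OF w])
  qed
  have main2: "w \<in> balA_ker scA s t"
    if w: "fsupp w" and hc: "\<forall>c. fmap (\<lambda>p. (fst p, snd p * c)) w \<in> balA_ker scA s t" for w
  proof -
    let ?S = "{p. w p \<noteq> 0}"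
    have fin: "finite ?S" using w unfolding fsupp_def .
    have H: "\<forall>\<beta> c. bal \<beta> \<longrightarrow> (\<Sum>p\<in>?S. w p * \<beta> (fst p) (snd p * c)) = 0"
    proof (intro allI impI)
      fix \<beta> c assume b: "bal \<beta>"
      have "fev2 \<beta> (fmap (\<lambda>p. (fst p, snd p * c)) w) = 0" using bal_kills[OF b] hc by blast
      then show "(\<Sum>p\<in>?S. w p * \<beta> (fst p) (snd p * c)) = 0"
        using fev_fmap[OF w, where \<phi>="\<lambda>p. \<beta> (fst p) (snd p)" and g="\<lambda>p. (fst p, snd p * c)"] by simp
    qed
    have "\<forall>\<beta>. bal \<beta> \<longrightarrow> fev2 \<beta> w = 0"
    proof (intro allI impI)
      fix \<beta> assume b: "bal \<beta>"
      have "(\<Sum>p\<in>?S. w p * \<beta> (fst p) (snd p)) = 0"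
      proof -
        consider (c1) "\<forall>F::'a set. finite F \<longrightarrow> (\<exists>e. \<forall>a\<in>F. a * e = a)"
          | (c2) "\<exists>E. left_sep_mult scB E"
          | (c3) "firm scB \<and> loc_proj_left scA scB s \<and> loc_proj_right scA scB t"
          using assms(18) by blast
        then show ?thesis
        proof cases
          case c1 then show ?thesis using case1_2[OF c1 fin H b] by simp
        next
          case c2
          then obtain E where E: "left_sep_mult scB E" by blast
          show ?thesis using case2_2[OF E fin H b] by simp
        next
          case c3
          then show ?thesis using case3_2[OF _ _ _ fin H b] by blast
        qed
      qed
      then show "fev2 \<beta> w = 0" unfolding fev_def by simp
    qed
    then show ?thesis by (rule sep_K[OF w])
  qed
  show ?thesis using main1 main2 by blast
qed

end
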